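(* Let $p\ge 1$, $N\ge 2p-1$, $0<T\le\infty$. (a) Let $(a_0(t),\dots,a_N(t))$, $t\in[0,T)$, be a solution with all $a_i(t)\neq 0$ of the finite system $$\dot a_i=a_i\Big(\prod_{j=1}^{p}a_{i+j}-\prod_{j=1}^{p}a_{i-j}\Big),\quad i=0,\dots,N,\qquad a_l=0\ \text{for } l<0 \text{ or } l>N.$$ Let $L1_N(t)$ be the $(N+2)\times(N+2)$ matrix (indices $0,\dots,N+1$) with $(L1_N)_{i,i+p}=1$ for $0\le i\le N+1-p$, $(L1_N)_{i+1,i}=a_i$ for $0\le i\le N$, other entries zero; let $S^l_k(t)=(L1_N(t)^k)_{l-1,0}$ for $l=1,\dots,p$, $k\ge0$, and $\alpha_{i,j}(t)=S^{\operatorname{rem}(i,p)+1}_{\lfloor i/p\rfloor+j}(t)$ for $i,j\ge0$. Let $C_0(t),\dots,C_{N+1}(t)$ be the coefficients with $\alpha_{i,j}=\sum_{v=0}^{N+1}C_v\alpha_{i,j-v-1}$ for all $i\ge0$, $j\ge N+2$ (equivalently $S^l_k=\sum_{v=0}^{N+1}C_vS^l_{k-v-1}$ for all $k\ge N+2$, $l=1,\dots,p$), and $D_0(t),\dots,D_{N+1}(t)$ the coefficients with $\alpha_{i,j}=\sum_{v=0}^{N+1}D_v\alpha_{i-v-1,j}$ for all $i\ge N+2$, $j\ge0$. Then each $C_v$ and each $D_v$ is constant in $t$ (a first integral of the $a$-system). (b) Let $(b_0(t),\dots,b_N(t))$, $t\in[0,T)$, be a solution with all $b_i(t)\ne0$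 of $$\dot b_i=b_i\Big(\sum_{j=1}^{p}b_{i+j}-\sum_{j=1}^{p}b_{i-j}\Big),\quad i=0,\dots,N,\qquad b_l=0\ \text{for } l<0\text{ or } l>N.$$ Let $L2_N(t)$ be the $(N+p+1)\times(N+p+1)$ matrix (indices $0,\dots,N+p$) with $(L2_N)_{i,i+1}=1$ for $0\le i\le N+p-1$, $(L2_N)_{i+p,i}=b_i$ for $0\le i\le N$, other entries zero; let $\tilde S^l_k(t)=(L2_N(t)^k)_{0,l-1}$, $l=1,\dots,p$, $k\ge0$, and let $\tilde C_0(t),\dots,\tilde C_{N+p}(t)$ be the coefficients with $\tilde S^l_k=\sum_{v=0}^{N+p}\tilde C_v\tilde S^l_{k-v-1}$ for all $k\ge N+p+1$, $l=1,\dots,p$. Then each $\tilde C_v$ is constant in $t$ (a first integral of the $b$-system).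
   Context: $\operatorname{rem}(a,b)$ is the remainder of $a$ modulo $b$. Standing facts from the paper: for each $t$ the infinite matrix $H=(\alpha_{i,j})_{i,j\ge0}$ has rank $N+2$ and its leading principal minors $\Delta_k=\det(\alpha_{i,j})_{i,j=0}^k$, $k=0,\dots,N+1$, are nonzero; analogously for the $b$-system the matrix $(\tilde S^{\operatorname{rem}(j,p)+1}_{i+\lfloor j/p\rfloor})_{i,j\ge0}$ has rank $N+p+1$ with nonzero leading principal minors of orders $1,\dots,N+p+1$. Hence the coefficients $C_v,D_v,\tilde C_v$ (the "finite rank coefficients") exist and are uniquely determined for each $t$. A first integral is a quantity constant along every such solution. *)

theory Defs
  imports Complex_Main "HOL-Library.Extended_Real" "Jordan_Normal_Form.Matrix"
begin

definition tdom :: "ereal \<Rightarrow> real set" where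
  "tdom T = {t. 0 \<le> t \<and> ereal t < T}"

definition zext :: "nat \<Rightarrow> (nat \<Rightarrow> real) \<Rightarrow> int \<Rightarrow> real" where
  "zext N x l = (if 0 \<le> l \<and> l \<le> int N then x (nat l) else 0)"

definition sol_a :: "nat \<Rightarrow> nat \<Rightarrow> ereal \<Rightarrow> (nat \<Rightarrow> real \<Rightarrow> real) \<Rightarrow> bool" where
  "sol_a p N T a \<longleftrightarrow>
     (\<forall>t\<in>tdom T. \<forall>i\<le>N. a i t \<noteq> 0 \<and>
        ((\<lambda>s. a i s) has_real_derivative
           a i t * ((\<Prod>j=1..p. zext N (\<lambda>k. a k t) (int i + int j))
                  - (\<Prod>j=1..p. zext N (\<lambda>k. a k t) (int i - int j))))
        (at t within tdom T))"

definition sol_b :: "nat \<Rightarrow> nat \<Rightarrow> ereal \<Rightarrow> (nat \<Rightarrow> real \<Rightarrow> real) \<Rightarrow> bool" where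
  "sol_b p N T b \<longleftrightarrow>
     (\<forall>t\<in>tdom T. \<forall>i\<le>N. b i t \<noteq> 0 \<and>
        ((\<lambda>s. b i s) has_real_derivative
           b i t * ((\<Sum>j=1..p. zext N (\<lambda>k. b k t) (int i + int j))
                  - (\<Sum>j=1..p. zext N (\<lambda>k. b k t) (int i - int j))))
        (at t within tdom T))"

definition L1 :: "nat \<Rightarrow> nat \<Rightarrow> (nat \<Rightarrow> real) \<Rightarrow> real mat" where
  "L1 p N a = mat (N+2) (N+2) (\<lambda>(i,j).
      (if j = i + p \<and> i \<le> N + 1 - p then 1 else 0)
    + (if i = j + 1 \<and> j \<le> N then a j else 0))"

definition L2 :: "nat \<Rightarrow> nat \<Rightarrow> (nat \<Rightarrow> real) \<Rightarrow> real mat" where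
  "L2 p N b = mat (N+p+1) (N+p+1) (\<lambda>(i,j).
      (if j = i + 1 \<and> i + 1 \<le> N + p then 1 else 0)
    + (if i = j + p \<and> j \<le> N then b j else 0))"

definition S :: "nat \<Rightarrow> nat \<Rightarrow> (nat \<Rightarrow> real) \<Rightarrow> nat \<Rightarrow> nat \<Rightarrow> real" where
  "S p N a l k = ((L1 p N a) ^\<^sub>m k) $$ (l - 1, 0)"

definition alpha :: "nat \<Rightarrow> nat \<Rightarrow> (nat \<Rightarrow> real) \<Rightarrow> nat \<Rightarrow> nat \<Rightarrow> real" where
  "alpha p N a i j = S p N a (i mod p + 1) (i div p + j)"

definition St :: "nat \<Rightarrow> nat \<Rightarrow> (nat \<Rightarrow> real) \<Rightarrow> nat \<Rightarrow> nat \<Rightarrow> real" where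
  "St p N b l k = ((L2 p N b) ^\<^sub>m k) $$ (0, l - 1)"

end

theory Submission
  imports Defs "HOL-Analysis.Analysis"
begin

lemma tri_zero:
  fixes x :: "nat \<Rightarrow> real" and w :: "nat \<Rightarrow> nat \<Rightarrow> real"
  assumes s: "\<And>k. k < n \<Longrightarrow> (\<Sum>v<n. x v * w (n - v - 1) k) = 0"
    and d: "\<And>i. i < n \<Longrightarrow> w i i \<noteq> 0"
    and u: "\<And>i k. i < k \<Longrightarrow> k < n \<Longrightarrow> w i k = 0"
  shows "v < n \<Longrightarrow> x v = 0"
proof (induction v rule: less_induct)
  case (less v)
  let ?k = "n - v - 1"
  have "(\<Sum>v'<n. x v' * w (n - v' - 1) ?k) = (\<Sum>v'\<in>{v}. x v' * w (n - v' - 1) ?k)"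
  proof (rule sum.mono_neutral_right)
    show "\<forall>i\<in>{..<n} - {v}. x i * w (n - i - 1) ?k = 0"
    proof
      fix i assume i: "i \<in> {..<n} - {v}"
      show "x i * w (n - i - 1) ?k = 0"
      proof (cases "i < v")
        case True thus ?thesis using less.IH less.prems by simp
      next
        case False
        hence "v < i" using i by auto
        hence "w (n - i - 1) ?k = 0" using u[of "n - i - 1" ?k] i less.prems by auto
        thus ?thesis by simp
      qed
    qed
  qed (use less.prems in auto)
  hence "x v * w ?k ?k = 0" using s[of ?k] less.prems by simp
  moreover have "w ?k ?k \<noteq> 0" using d less.prems by auto
  ultimately show ?case by simp
qed

lemma tri_zero2:
  fixes y :: "nat \<Rightarrow> nat \<Rightarrow> real" and z :: "nat \<Rightarrow> real"
  assumes s: "\<And>i. i < n \<Longrightarrow> (\<Sum>m<n. y i m * z m) = 0"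
    and d: "\<And>i. i < n \<Longrightarrow> y i i \<noteq> 0"
    and u: "\<And>i m. i < m \<Longrightarrow> m < n \<Longrightarrow> y i m = 0"
  shows "i < n \<Longrightarrow> z i = 0"
proof (induction i rule: less_induct)
  case (less i)
  have "(\<Sum>m<n. y i m * z m) = (\<Sum>m\<in>{i}. y i m * z m)"
  proof (rule sum.mono_neutral_right)
    show "\<forall>m\<in>{..<n} - {i}. y i m * z m = 0"
    proof
      fix m assume m: "m \<in> {..<n} - {i}"
      show "y i m * z m = 0"
      proof (cases "m < i")
        case True thus ?thesis using less.IH less.prems by simp
      next
        case False
        hence "i < m" using m by auto
        thus ?thesis using u m by auto
      qed
    qed
  qed (use less.prems in auto)
  hence "y i i * z i = 0" using s[of i] less.prems by simp
  thus ?case using d less.prems by simp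
qed

lemma split_top:
  fixes c :: "nat \<Rightarrow> real" and w :: "nat \<Rightarrow> nat \<Rightarrow> real"
  assumes u: "\<And>i k. i < k \<Longrightarrow> k < n \<Longrightarrow> w i k = 0" and v: "v < n"
  shows "(\<Sum>v'<n. c v' * w (n - v' - 1) (n - v - 1))
       = c v * w (n - v - 1) (n - v - 1) + (\<Sum>v'<v. c v' * w (n - v' - 1) (n - v - 1))"
proof -
  have "(\<Sum>v'<n. c v' * w (n - v' - 1) (n - v - 1)) = (\<Sum>v'<Suc v. c v' * w (n - v' - 1) (n - v - 1))"
  proof (rule sum.mono_neutral_right)
    show "\<forall>i\<in>{..<n} - {..<Suc v}. c i * w (n - i - 1) (n - v - 1) = 0"
      using u v by auto
  qed (use v in auto)
  thus ?thesis by simp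
qed

lemma gen_const:
  fixes S :: "real set" and n :: nat and w :: "nat \<Rightarrow> real \<Rightarrow> nat \<Rightarrow> real"
    and M :: "real \<Rightarrow> nat \<Rightarrow> nat \<Rightarrow> real" and c :: "nat \<Rightarrow> real \<Rightarrow> real"
  assumes conv: "convex S"
    and nb: "\<And>t. t \<in> S \<Longrightarrow> at t within S \<noteq> bot"
    and der: "\<And>t i k. t \<in> S \<Longrightarrow> i \<le> n \<Longrightarrow> k < n \<Longrightarrow>
        ((\<lambda>s. w i s k) has_real_derivative (\<Sum>m<n. M t k m * w i t m)) (at t within S)"
    and diag: "\<And>t i. t \<in> S \<Longrightarrow> i < n \<Longrightarrow> w i t i \<noteq> 0"
    and up: "\<And>t i k. t \<in> S \<Longrightarrow> i < k \<Longrightarrow> k < n \<Longrightarrow> w i t k = 0"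
    and rec: "\<And>t k. t \<in> S \<Longrightarrow> k < n \<Longrightarrow> w n t k = (\<Sum>v<n. c v t * w (n - v - 1) t k)"
  shows "v < n \<Longrightarrow> t \<in> S \<Longrightarrow> t' \<in> S \<Longrightarrow> c v t = c v t'"
proof -
  have A: "\<forall>t\<in>S. \<exists>D. (c v has_real_derivative D) (at t within S)" if "v < n" for v
    using that
  proof (induction v rule: less_induct)
    case (less v)
    show ?case
    proof
      fix t assume t: "t \<in> S"
      let ?k = "n - v - 1"
      have "\<forall>v'\<in>{..<v}. \<exists>D. (c v' has_real_derivative D) (at t within S)"
        using less t by auto
      then obtain Df where Df: "\<forall>v'\<in>{..<v}. (c v' has_real_derivative Df v') (at t within S)"
        by (metis bchoice)
      define g where "g s = (w n s ?k - (\<Sum>v'<v. c v' s * w (n - v' - 1) s ?k)) / w ?k s ?k" for s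
      have eq: "c v s = g s" if s: "s \<in> S" for s
      proof -
        have "w n s ?k = c v s * w ?k s ?k + (\<Sum>v'<v. c v' s * w (n - v' - 1) s ?k)"
          using rec[OF s, of ?k] split_top[of n "w' s" v "\<lambda>v'. c v' s" for w'] less.prems
            split_top[of n "\<lambda>i k. w i s k" v "\<lambda>v'. c v' s"] up[OF s] by auto
        moreover have "w ?k s ?k \<noteq> 0" using diag[OF s] less.prems by auto
        ultimately show ?thesis unfolding g_def by (simp add: field_simps)
      qed
      have h1: "((\<lambda>s. w n s ?k) has_real_derivative (\<Sum>m<n. M t ?k m * w n t m)) (at t within S)"
        using der[OF t, of n ?k] less.prems by auto
      have h2: "((\<lambda>s. \<Sum>v'<v. c v' s * w (n - v' - 1) s ?k) has_real_derivative
          (\<Sum>v'<v. Df v' * w (n - v' - 1) t ?k + (\<Sum>m<n. M t ?k m * w (n - v' - 1) t m) * c v' t)) (at t within S)"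
      proof (rule DERIV_sum)
        fix v' assume v': "v' \<in> {..<v}"
        show "((\<lambda>s. c v' s * w (n - v' - 1) s ?k) has_real_derivative
          Df v' * w (n - v' - 1) t ?k + (\<Sum>m<n. M t ?k m * w (n - v' - 1) t m) * c v' t) (at t within S)"
          by (rule DERIV_mult) (use Df v' der[OF t, of "n - v' - 1" ?k] less.prems in auto)
      qed
      have h3: "((\<lambda>s. w ?k s ?k) has_real_derivative (\<Sum>m<n. M t ?k m * w ?k t m)) (at t within S)"
        using der[OF t, of ?k ?k] less.prems by auto
      note h4 = DERIV_divide[OF DERIV_diff[OF h1 h2] h3]
      have "w ?k t ?k \<noteq> 0" using diag[OF t] less.prems by auto
      from h4[OF this] have "\<exists>D. (g has_real_derivative D) (at t within S)" unfolding g_def by blast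
      then obtain D where "(g has_real_derivative D) (at t within S)" by blast
      hence "(c v has_real_derivative D) (at t within S)"
        by (rule has_field_derivative_transform_within[where d=1]) (use t eq in auto)
      thus "\<exists>D. (c v has_real_derivative D) (at t within S)" by blast
    qed
  qed
  define cd where "cd v t = (SOME D. (c v has_real_derivative D) (at t within S))" for v t
  have cd: "(c v has_real_derivative cd v t) (at t within S)" if "v < n" "t \<in> S" for v t
    unfolding cd_def using A[OF that(1)] that(2) by (metis someI_ex)
  have cd0: "cd v t = 0" if vt: "v < n" "t \<in> S" for v t
  proof -
    have "(\<Sum>v<n. cd v t * w (n - v - 1) t k) = 0" if k: "k < n" for k
    proof -
      have t: "t \<in> S" by fact
      define Z where "Z s = w n s k - (\<Sum>v<n. c v s * w (n - v - 1) s k)" for s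
      have h1: "((\<lambda>s. w n s k) has_real_derivative (\<Sum>m<n. M t k m * w n t m)) (at t within S)"
        using der[OF t, of n k] k by auto
      have h2: "((\<lambda>s. \<Sum>v<n. c v s * w (n - v - 1) s k) has_real_derivative
          (\<Sum>v<n. cd v t * w (n - v - 1) t k + (\<Sum>m<n. M t k m * w (n - v - 1) t m) * c v t)) (at t within S)"
      proof (rule DERIV_sum)
        fix v assume v: "v \<in> {..<n}"
        show "((\<lambda>s. c v s * w (n - v - 1) s k) has_real_derivative
          cd v t * w (n - v - 1) t k + (\<Sum>m<n. M t k m * w (n - v - 1) t m) * c v t) (at t within S)"
          by (rule DERIV_mult) (use cd[of v t] v t der[OF t, of "n - v - 1" k] k in auto)
      qed
      have hZ: "(Z has_real_derivative (\<Sum>m<n. M t k m * w n t m) -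
          (\<Sum>v<n. cd v t * w (n - v - 1) t k + (\<Sum>m<n. M t k m * w (n - v - 1) t m) * c v t)) (at t within S)"
        unfolding Z_def by (rule DERIV_diff[OF h1 h2])
      have hz0: "(Z has_real_derivative 0) (at t within S)"
        by (rule has_field_derivative_transform_within[where f="\<lambda>_. 0" and d=1])
           (use rec k t in \<open>auto simp: Z_def\<close>)
      note hZ' = hZ[unfolded has_real_derivative_iff_has_vector_derivative]
      note h0' = hz0[unfolded has_real_derivative_iff_has_vector_derivative]
      have E: "(\<Sum>m<n. M t k m * w n t m) -
          (\<Sum>v<n. cd v t * w (n - v - 1) t k + (\<Sum>m<n. M t k m * w (n - v - 1) t m) * c v t) = 0"
        by (rule vector_derivative_unique_within[OF nb[OF t] hZ' h0'])
      have "(\<Sum>v<n. (\<Sum>m<n. M t k m * w (n - v - 1) t m) * c v t)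
          = (\<Sum>v<n. \<Sum>m<n. M t k m * w (n - v - 1) t m * c v t)"
        by (simp add: sum_distrib_right)
      also have "\<dots> = (\<Sum>m<n. \<Sum>v<n. M t k m * w (n - v - 1) t m * c v t)"
        by (rule sum.swap)
      also have "\<dots> = (\<Sum>m<n. M t k m * (\<Sum>v<n. c v t * w (n - v - 1) t m))"
        by (simp add: sum_distrib_left mult_ac)
      also have "\<dots> = (\<Sum>m<n. M t k m * w n t m)"
        by (rule sum.cong) (use rec[OF t] in auto)
      finally have sw: "(\<Sum>v<n. (\<Sum>m<n. M t k m * w (n - v - 1) t m) * c v t) = (\<Sum>m<n. M t k m * w n t m)" .
      have "(\<Sum>v<n. cd v t * w (n - v - 1) t k + (\<Sum>m<n. M t k m * w (n - v - 1) t m) * c v t)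
         = (\<Sum>v<n. cd v t * w (n - v - 1) t k) + (\<Sum>v<n. (\<Sum>m<n. M t k m * w (n - v - 1) t m) * c v t)"
        by (rule sum.distrib)
      thus ?thesis using E sw by linarith
    qed
    thus ?thesis
      using tri_zero[of n "\<lambda>v. cd v t" "\<lambda>i k. w i t k" v] diag[OF vt(2)] up[OF vt(2)] vt(1) by blast
  qed
  assume v: "v < n" and tt: "t \<in> S" "t' \<in> S"
  have "\<exists>c0. \<forall>x\<in>S. c v x = c0"
  proof (rule has_derivative_zero_constant[OF conv])
    fix x assume x: "x \<in> S"
    have "(c v has_real_derivative 0) (at x within S)" using cd[OF v x] cd0[OF v x] by simp
    moreover have "((*) (0::real)) = (\<lambda>h. 0)" by auto
    ultimately show "(c v has_derivative (\<lambda>h. 0)) (at x within S)"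
      unfolding has_field_derivative_def by simp
  qed
  thus "c v t = c v t'" using tt by auto
qed


lemma mult_entry:
  fixes A B :: "real mat"
  assumes "A \<in> carrier_mat n n" "B \<in> carrier_mat n n" "i < n" "j < n"
  shows "(A * B) $$ (i,j) = (\<Sum>m<n. A $$ (i,m) * B $$ (m,j))"
  using assms by (auto simp: scalar_prod_def atLeast0LessThan intro!: sum.cong)

lemma pow_add_mat:
  fixes A :: "real mat"
  assumes A: "A \<in> carrier_mat n n"
  shows "A ^\<^sub>m (k + l) = A ^\<^sub>m k * A ^\<^sub>m l"
proof (induction l)
  case 0 thus ?case using A by simp
next
  case (Suc l)
  have "A ^\<^sub>m (k + Suc l) = (A ^\<^sub>m k * A ^\<^sub>m l) * A" using Suc by simp
  also have "\<dots> = A ^\<^sub>m k * (A ^\<^sub>m l * A)" using A by (intro assoc_mult_mat) auto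
  finally show ?case by simp
qed

lemma pow_comm_mat:
  fixes A :: "real mat"
  assumes A: "A \<in> carrier_mat n n"
  shows "A ^\<^sub>m k * A = A * A ^\<^sub>m k"
proof (induction k)
  case 0 thus ?case using A by simp
next
  case (Suc k)
  have "A ^\<^sub>m Suc k * A = (A ^\<^sub>m k * A) * A" by simp
  also have "\<dots> = (A * A ^\<^sub>m k) * A" using Suc by simp
  also have "\<dots> = A * (A ^\<^sub>m k * A)" using A by (intro assoc_mult_mat) auto
  finally show ?case by simp
qed

lemma pow_Suc_left_entry:
  fixes A :: "real mat"
  assumes A: "A \<in> carrier_mat n n" and ij: "i < n" "j < n"
  shows "(A ^\<^sub>m Suc k) $$ (i,j) = (\<Sum>m<n. A $$ (i,m) * (A ^\<^sub>m k) $$ (m,j))"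
  using pow_comm_mat[OF A, of k] mult_entry[of A n "A ^\<^sub>m k" i j] A ij by simp

lemma pow_Suc_right_entry:
  fixes A :: "real mat"
  assumes A: "A \<in> carrier_mat n n" and ij: "i < n" "j < n"
  shows "(A ^\<^sub>m Suc k) $$ (i,j) = (\<Sum>m<n. (A ^\<^sub>m k) $$ (i,m) * A $$ (m,j))"
  using mult_entry[of "A ^\<^sub>m k" n A i j] A ij by simp

lemma pow_add_entry:
  fixes A :: "real mat"
  assumes A: "A \<in> carrier_mat n n" and ij: "i < n" "j < n"
  shows "(A ^\<^sub>m (k + l)) $$ (i,j) = (\<Sum>m<n. (A ^\<^sub>m k) $$ (i,m) * (A ^\<^sub>m l) $$ (m,j))"
  using pow_add_mat[OF A, of k l] mult_entry[of "A ^\<^sub>m k" n "A ^\<^sub>m l" i j] A ij by simp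

definition mder :: "real set \<Rightarrow> nat \<Rightarrow> (real \<Rightarrow> real mat) \<Rightarrow> real mat \<Rightarrow> real \<Rightarrow> bool" where
  "mder U n A A' t \<longleftrightarrow> (\<forall>i<n. \<forall>j<n. ((\<lambda>s. A s $$ (i,j)) has_real_derivative A' $$ (i,j)) (at t within U))"

lemma mder_cong:
  assumes "mder U n A X t" "\<And>i j. i < n \<Longrightarrow> j < n \<Longrightarrow> X $$ (i,j) = Y $$ (i,j)"
  shows "mder U n A Y t"
  using assms unfolding mder_def by metis

lemma mder_mult:
  assumes A: "\<And>s. A s \<in> carrier_mat n n" and B: "\<And>s. B s \<in> carrier_mat n n"
    and A': "A' \<in> carrier_mat n n" and B': "B' \<in> carrier_mat n n"
    and dA: "mder U n A A' t" and dB: "mder U n B B' t"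
  shows "mder U n (\<lambda>s. A s * B s) (A' * B t + A t * B') t"
  unfolding mder_def
proof (intro allI impI)
  fix i j assume ij: "i < n" "j < n"
  have e: "(\<lambda>s. (A s * B s) $$ (i,j)) = (\<lambda>s. \<Sum>m<n. A s $$ (i,m) * B s $$ (m,j))"
    using mult_entry[OF A B ij] by simp
  have "((\<lambda>s. \<Sum>m<n. A s $$ (i,m) * B s $$ (m,j)) has_real_derivative
      (\<Sum>m<n. A' $$ (i,m) * B t $$ (m,j) + B' $$ (m,j) * A t $$ (i,m))) (at t within U)"
    by (rule DERIV_sum, rule DERIV_mult) (use dA dB ij in \<open>auto simp: mder_def\<close>)
  moreover have "(\<Sum>m<n. A' $$ (i,m) * B t $$ (m,j) + B' $$ (m,j) * A t $$ (i,m))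
      = (A' * B t + A t * B') $$ (i,j)"
  proof -
    have "(A' * B t + A t * B') $$ (i,j) = (A' * B t)$$(i,j) + (A t * B')$$(i,j)"
      by (rule index_add_mat(1)) (use A[of t] B' ij in auto)
    also have "\<dots> = (\<Sum>m<n. A' $$ (i,m) * B t $$ (m,j)) + (\<Sum>m<n. A t $$ (i,m) * B' $$ (m,j))"
      using mult_entry[OF A' B[of t] ij] mult_entry[OF A[of t] B' ij] by simp
    finally show ?thesis by (simp add: sum.distrib mult_ac)
  qed
  ultimately show "((\<lambda>s. (A s * B s) $$ (i,j)) has_real_derivative (A' * B t + A t * B') $$ (i,j)) (at t within U)"
    unfolding e by simp
qed

lemma mder_pow:
  assumes A: "\<And>s. A s \<in> carrier_mat n n" and V: "V \<in> carrier_mat n n"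
    and dA: "mder U n A (A t * V - V * A t) t"
  shows "mder U n (\<lambda>s. A s ^\<^sub>m k) (A t ^\<^sub>m k * V - V * A t ^\<^sub>m k) t"
proof (induction k)
  case 0
  have "dim_row (A s) = n" for s using A[of s] by auto
  hence e: "(\<lambda>s. A s ^\<^sub>m 0) = (\<lambda>s. 1\<^sub>m n)" by simp
  show ?case unfolding e mder_def using V A[of t] by simp
next
  case (Suc k)
  let ?P = "A t ^\<^sub>m k"
  have P: "?P \<in> carrier_mat n n" using A by simp
  have At: "A t \<in> carrier_mat n n" by (rule A)
  have m: "mder U n (\<lambda>s. A s ^\<^sub>m k * A s) ((?P * V - V * ?P) * A t + ?P * (A t * V - V * A t)) t"
    by (rule mder_mult[OF _ A _ _ Suc dA]) (use A V P in \<open>auto intro: minus_carrier_mat\<close>)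
  show ?case
  proof (rule mder_cong)
    show "mder U n (\<lambda>s. A s ^\<^sub>m Suc k) ((?P * V - V * ?P) * A t + ?P * (A t * V - V * A t)) t"
      using m by simp
  next
    fix i j assume ij: "i < n" "j < n"
    have "(?P * V - V * ?P) * A t + ?P * (A t * V - V * A t)
        = (?P * V * A t - V * ?P * A t) + (?P * (A t * V) - ?P * (V * A t))"
    proof -
      have d1: "(?P * V - V * ?P) * A t = ?P * V * A t - V * ?P * A t"
        by (rule minus_mult_distrib_mat[of _ n n]) (use P V At in auto)
      have d2: "?P * (A t * V - V * A t) = ?P * (A t * V) - ?P * (V * A t)"
        by (rule mult_minus_distrib_mat[of _ n n]) (use P V At in auto)
      show ?thesis unfolding d1 d2 ..
    qed
    also have "\<dots> = (?P * (V * A t) - V * (?P * A t)) + ((?P * A t) * V - ?P * (V * A t))"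
    proof -
      have a1: "?P * V * A t = ?P * (V * A t)" by (rule assoc_mult_mat[OF P V At])
      have a2: "V * ?P * A t = V * (?P * A t)" by (rule assoc_mult_mat[OF V P At])
      have a3: "?P * (A t * V) = (?P * A t) * V" by (rule assoc_mult_mat[OF P At V, symmetric])
      show ?thesis unfolding a1 a2 a3 ..
    qed
    finally have e: "(?P * V - V * ?P) * A t + ?P * (A t * V - V * A t)
       = (?P * (V * A t) - V * (?P * A t)) + ((?P * A t) * V - ?P * (V * A t))" .
    show "((?P * V - V * ?P) * A t + ?P * (A t * V - V * A t)) $$ (i,j)
        = (A t ^\<^sub>m Suc k * V - V * A t ^\<^sub>m Suc k) $$ (i,j)"
      unfolding e using P V At ij by simp
  qed
qed

lemma tdom_convex: "convex (tdom T)"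
proof -
  have "u * x + v * y \<in> tdom T" if h: "x \<in> tdom T" "y \<in> tdom T" "0 \<le> u" "0 \<le> v" "u + v = 1"
    for x y u v :: real
  proof -
    from h have h': "0 \<le> x" "ereal x < T" "0 \<le> y" "ereal y < T" unfolding tdom_def by auto
    have a: "0 \<le> u * x + v * y" using h h' by simp
    have "u * x \<le> u * max x y" "v * y \<le> v * max x y" using h by (simp_all add: mult_left_mono)
    hence "u * x + v * y \<le> (u + v) * max x y" by (simp add: algebra_simps)
    hence "u * x + v * y \<le> max x y" using h by simp
    hence "u * x + v * y \<le> x \<or> u * x + v * y \<le> y" by (auto simp: max_def split: if_splits)
    hence "ereal (u * x + v * y) < T"
    proof
      assume "u * x + v * y \<le> x"
      hence "ereal (u * x + v * y) \<le> ereal x" by simp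
      thus ?thesis using h'(2) by (rule order.strict_trans1)
    next
      assume "u * x + v * y \<le> y"
      hence "ereal (u * x + v * y) \<le> ereal y" by simp
      thus ?thesis using h'(4) by (rule order.strict_trans1)
    qed
    thus ?thesis using a unfolding tdom_def by simp
  qed
  thus ?thesis unfolding convex_def by auto
qed

lemma tdom_nb:
  assumes t: "t \<in> tdom T"
  shows "at t within tdom T \<noteq> bot"
proof -
  from t have t0: "0 \<le> t" "ereal t < T" unfolding tdom_def by auto
  obtain z where z: "ereal t < ereal z" "ereal z < T" using ereal_dense2[OF t0(2)] by blast
  have "t islimpt tdom T"
    unfolding islimpt_approachable
  proof (intro allI impI)
    fix e :: real assume e: "0 < e"
    define m where "m = min (z - t) e"
    let ?x = "t + m / 2"
    have tz: "t < z" using z by simp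
    have "?x \<in> tdom T"
    proof -
      have "m \<le> z - t" "0 < m" using tz e unfolding m_def by auto
      hence "?x < z" by linarith
      hence "ereal ?x < ereal z" by simp
      hence "ereal ?x < T" using z(2) by (rule less_trans)
      moreover have "0 \<le> ?x" using t0 tz e unfolding m_def by simp
      ultimately show ?thesis unfolding tdom_def by simp
    qed
    moreover have "?x \<noteq> t" using tz e unfolding m_def by simp
    moreover have "dist ?x t < e"
    proof -
      have "m \<le> e" "0 < m" using tz e unfolding m_def by auto
      thus ?thesis by (simp add: dist_real_def)
    qed
    ultimately show "\<exists>x'\<in>tdom T. x' \<noteq> t \<and> dist x' t < e" by blast
  qed
  thus ?thesis using trivial_limit_within by blast
qed


lemma sum_delta_if:
  fixes f :: "nat \<Rightarrow> real"
  shows "(\<Sum>m<n. if m = x \<and> P then f m else 0) = (if x < n \<and> P then f x else 0)"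
  by (cases P) (simp_all add: sum.delta)

definition uu :: "nat \<Rightarrow> nat \<Rightarrow> (nat \<Rightarrow> real) \<Rightarrow> nat \<Rightarrow> nat \<Rightarrow> real" where
  "uu p N a j k = (L1 p N a ^\<^sub>m j) $$ (k, 0)"

definition rr :: "nat \<Rightarrow> nat \<Rightarrow> (nat \<Rightarrow> real) \<Rightarrow> nat \<Rightarrow> nat \<Rightarrow> real" where
  "rr p N a i m = (L1 p N a ^\<^sub>m (i div p)) $$ (i mod p, m)"

definition QQ :: "nat \<Rightarrow> nat \<Rightarrow> (nat \<Rightarrow> real) \<Rightarrow> int \<Rightarrow> real" where
  "QQ p N a x = (\<Prod>s=0..p. zext N a (x + int s))"

definition BB :: "nat \<Rightarrow> nat \<Rightarrow> (nat \<Rightarrow> real) \<Rightarrow> real mat" where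
  "BB p N a = Matrix.mat (N+2) (N+2) (\<lambda>(i,j). if i = j + p + 1 then QQ p N a (int j) else 0)"

lemma L1_carrier: "L1 p N a \<in> carrier_mat (N+2) (N+2)"
  unfolding L1_def by simp

lemma BB_carrier: "BB p N a \<in> carrier_mat (N+2) (N+2)"
  unfolding BB_def by simp

lemma BB_entry: "i < N+2 \<Longrightarrow> j < N+2 \<Longrightarrow> BB p N a $$ (i,j) = (if i = j + p + 1 then QQ p N a (int j) else 0)"
  unfolding BB_def by simp

context
  fixes p N :: nat
  assumes p1: "1 \<le> p" and pN: "p \<le> N"
begin

lemma L1_row:
  assumes "i < N+2" "m < N+2"
  shows "L1 p N a $$ (i,m) = (if m = i + p \<and> i + p \<le> N+1 then 1 else 0) + (if m = i - 1 \<and> 1 \<le> i then a m else 0)"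
  using assms pN unfolding L1_def by auto

lemma L1_col:
  assumes "i < N+2" "m < N+2"
  shows "L1 p N a $$ (i,m) = (if i = m - p \<and> p \<le> m then 1 else 0) + (if i = m + 1 \<and> m \<le> N then a m else 0)"
  using assms pN unfolding L1_def by auto

lemma uu_Suc:
  assumes k: "k < N+2"
  shows "uu p N a (Suc j) k = (if k + p \<le> N+1 then uu p N a j (k+p) else 0) + (if 1 \<le> k then a (k-1) * uu p N a j (k-1) else 0)"
proof -
  have "uu p N a (Suc j) k = (\<Sum>m<N+2. L1 p N a $$ (k,m) * uu p N a j m)"
    unfolding uu_def by (rule pow_Suc_left_entry[OF L1_carrier]) (use k in auto)
  also have "\<dots> = (\<Sum>m<N+2. (if m = k + p \<and> k + p \<le> N+1 then uu p N a j m else 0)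
      + (if m = k - 1 \<and> 1 \<le> k then a m * uu p N a j m else 0))"
    by (rule sum.cong) (use k in \<open>auto simp: L1_row\<close>)
  also have "\<dots> = (if k + p \<le> N+1 then uu p N a j (k+p) else 0) + (if 1 \<le> k then a (k-1) * uu p N a j (k-1) else 0)"
    using k by (auto simp: sum.distrib sum_delta_if)
  finally show ?thesis .
qed

lemma uu_0: "k < N+2 \<Longrightarrow> uu p N a 0 k = (if k = 0 then 1 else 0)"
  unfolding uu_def L1_def by simp

lemma uu_tri: "j < k \<Longrightarrow> k < N+2 \<Longrightarrow> uu p N a j k = 0"
proof (induction j arbitrary: k)
  case 0 thus ?case by (simp add: uu_0)
next
  case (Suc j)
  show ?case using Suc.prems Suc.IH[of "k+p"] Suc.IH[of "k-1"] by (simp add: uu_Suc)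
qed

lemma uu_diag: "j < N+2 \<Longrightarrow> uu p N a j j = (\<Prod>s<j. a s)"
proof (induction j)
  case 0 thus ?case by (simp add: uu_0)
next
  case (Suc j)
  show ?case using Suc uu_tri[of j "Suc j + p"] by (simp add: uu_Suc)
qed

lemma uu_small: "j \<le> p \<Longrightarrow> k < N+2 \<Longrightarrow> uu p N a j k = (if k = j then (\<Prod>s<j. a s) else 0)"
proof (induction j arbitrary: k)
  case 0 thus ?case by (simp add: uu_0)
next
  case (Suc j)
  have "k + p \<noteq> j" using Suc.prems by auto
  thus ?case using Suc.prems Suc.IH[of "k+p"] Suc.IH[of "k-1"]
    by (auto simp: uu_Suc)
qed

lemma uu_p1: "k < N+2 \<Longrightarrow> uu p N a (Suc p) k
   = (if k = 0 then (\<Prod>s<p. a s) else 0) + (if k = p + 1 then (\<Prod>s<Suc p. a s) else 0)"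
  using pN by (auto simp: uu_Suc uu_small)

lemma QQ_0: "QQ p N a 0 = (\<Prod>s<Suc p. a s)"
proof -
  have "QQ p N a 0 = (\<Prod>s=0..p. a s)"
    unfolding QQ_def using pN by (intro prod.cong) (auto simp: zext_def)
  thus ?thesis by (simp add: atLeast0AtMost lessThan_Suc_atMost)
qed

lemma BB_col0: "m < N+2 \<Longrightarrow> BB p N a $$ (m, 0) = uu p N a (Suc p) m - (if m = 0 then (\<Prod>s<p. a s) else 0)"
  using p1 by (auto simp: BB_entry uu_p1 QQ_0)

lemma rr_step:
  assumes m: "m < N+2"
  shows "rr p N a (i + p) m = (if p \<le> m then rr p N a i (m - p) else 0) + (if m \<le> N then a m * rr p N a i (m+1) else 0)"
proof -
  have d: "(i + p) div p = Suc (i div p)" "(i + p) mod p = i mod p" using p1 by auto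
  have l: "i mod p < N+2" proof -
    have "i mod p < p" using p1 by simp
    thus ?thesis using pN by linarith
  qed
  have "rr p N a (i + p) m = (\<Sum>x<N+2. rr p N a i x * L1 p N a $$ (x, m))"
    unfolding rr_def d by (rule pow_Suc_right_entry[OF L1_carrier]) (use l m in auto)
  also have "\<dots> = (\<Sum>x<N+2. (if x = m - p \<and> p \<le> m then rr p N a i x else 0)
      + (if x = m + 1 \<and> m \<le> N then a m * rr p N a i x else 0))"
    by (rule sum.cong) (use m in \<open>auto simp: L1_col\<close>)
  also have "\<dots> = (if p \<le> m then rr p N a i (m - p) else 0) + (if m \<le> N then a m * rr p N a i (m+1) else 0)"
    using m by (auto simp: sum.distrib sum_delta_if)
  finally show ?thesis .
qed

lemma rr_small: "i < p \<Longrightarrow> m < N+2 \<Longrightarrow> rr p N a i m = (if m = i then 1 else 0)"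
proof -
  assume h: "i < p" "m < N+2"
  hence "i < N+2" using pN by linarith
  thus ?thesis unfolding rr_def L1_def using h by simp
qed

lemma rr_tri_diag: "i < N+2 \<Longrightarrow> rr p N a i i = 1 \<and> (\<forall>m. i < m \<and> m < N+2 \<longrightarrow> rr p N a i m = 0)"
proof (induction i rule: less_induct)
  case (less i)
  show ?case
  proof (cases "i < p")
    case True thus ?thesis using less.prems by (simp add: rr_small)
  next
    case False
    define i' where "i' = i - p"
    have ii: "i = i' + p" using False unfolding i'_def by simp
    have IH: "rr p N a i' i' = 1" "\<And>m. i' < m \<Longrightarrow> m < N+2 \<Longrightarrow> rr p N a i' m = 0"
      using less.IH[of i'] less.prems p1 ii by auto
    have "rr p N a i i = 1"
      unfolding ii using less.prems IH ii by (auto simp: rr_step)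
    moreover have "\<forall>m. i < m \<and> m < N+2 \<longrightarrow> rr p N a i m = 0"
      unfolding ii using less.prems IH ii by (auto simp: rr_step)
    ultimately show ?thesis by blast
  qed
qed

lemma rr_diag: "i < N+2 \<Longrightarrow> rr p N a i i = 1"
  using rr_tri_diag by blast

lemma rr_tri: "i < m \<Longrightarrow> m < N+2 \<Longrightarrow> rr p N a i m = 0"
  using rr_tri_diag[of i] by auto

lemma alpha_dot: "alpha p N a i j = (\<Sum>m<N+2. rr p N a i m * uu p N a j m)"
proof -
  have l: "i mod p < N+2"
  proof -
    have "i mod p < p" using p1 by simp
    thus ?thesis using pN by linarith
  qed
  have e: "i mod p + 1 - 1 = i mod p" by simp
  show ?thesis
    unfolding alpha_def S_def rr_def uu_def e
    by (rule pow_add_entry[OF L1_carrier]) (use l in auto)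
qed

lemma QQ_split: "QQ p N a x = zext N a x * (\<Prod>k=1..p. zext N a (x + int k))"
proof -
  have "{0..p} = insert 0 {1..p}" by auto
  thus ?thesis unfolding QQ_def by simp
qed

lemma QQ_refl: "QQ p N a (x - int p) = zext N a x * (\<Prod>k=1..p. zext N a (x - int k))"
proof -
  have "QQ p N a (x - int p) = (\<Prod>k=0..p. zext N a (x - int k))"
    unfolding QQ_def
    by (rule prod.reindex_bij_witness[of _ "\<lambda>k. p - k" "\<lambda>k. p - k"]) (auto simp: of_nat_diff algebra_simps)
  also have "{0..p} = insert 0 {1..p}" by auto
  finally show ?thesis by simp
qed

lemma QQ_neg: "x < 0 \<Longrightarrow> QQ p N a x = 0"
  unfolding QQ_split by (simp add: zext_def)

lemma QQ_big: "int N < x + int p \<Longrightarrow> QQ p N a x = 0"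
proof -
  assume h: "int N < x + int p"
  have "p \<in> {0..p}" by simp
  moreover have "zext N a (x + int p) = 0" using h by (simp add: zext_def)
  ultimately show ?thesis unfolding QQ_def by (meson finite_atLeastAtMost prod_zero_iff)
qed

lemma QQ_shift: "j + p + 1 \<le> N \<Longrightarrow> a (j + p + 1) * QQ p N a (int j) = a j * QQ p N a (int (j + 1))"
proof -
  assume h: "j + p + 1 \<le> N"
  have "QQ p N a (int (j+1)) = (\<Prod>s=0..p. zext N a (int j + int (Suc s)))"
    unfolding QQ_def by (intro prod.cong) (auto simp: algebra_simps)
  also have "\<dots> = (\<Prod>s=1..Suc p. zext N a (int j + int s))"
    using prod.shift_bounds_cl_Suc_ivl[of "\<lambda>s. zext N a (int j + int s)" 0 p] by simp
  also have "\<dots> = (\<Prod>s=1..p. zext N a (int j + int s)) * zext N a (int j + int (Suc p))"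
    by (simp add: prod.cl_ivl_Suc)
  finally have e1: "QQ p N a (int (j+1)) = (\<Prod>s=1..p. zext N a (int j + int s)) * zext N a (int j + int (Suc p))" .
  have z1: "zext N a (int j + int (Suc p)) = a (j + p + 1)" using h by (simp add: zext_def nat_add_distrib)
  have z0: "zext N a (int j) = a j" using h by (simp add: zext_def)
  show ?thesis using e1 z1 z0 QQ_split[of a "int j"] by simp
qed

lemma LB_entry:
  assumes ij: "i < N+2" "j < N+2"
  shows "(L1 p N a * BB p N a) $$ (i,j) = (if i + p \<le> N+1 \<and> i = j + 1 then QQ p N a (int j) else 0)
     + (if 1 \<le> i \<and> i = j + p + 2 then a (i - 1) * QQ p N a (int j) else 0)"
proof -
  have "(L1 p N a * BB p N a) $$ (i,j) = (\<Sum>m<N+2. L1 p N a $$ (i,m) * BB p N a $$ (m,j))"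
    by (rule mult_entry[OF L1_carrier BB_carrier ij])
  also have "\<dots> = (\<Sum>m<N+2. (if m = i + p \<and> i + p \<le> N+1 then BB p N a $$ (m,j) else 0)
      + (if m = i - 1 \<and> 1 \<le> i then a m * BB p N a $$ (m,j) else 0))"
    by (rule sum.cong) (use ij in \<open>auto simp: L1_row\<close>)
  also have "\<dots> = (if i + p \<le> N+1 then BB p N a $$ (i+p,j) else 0) + (if 1 \<le> i then a (i-1) * BB p N a $$ (i-1,j) else 0)"
    using ij by (auto simp: sum.distrib sum_delta_if)
  also have "\<dots> = (if i + p \<le> N+1 \<and> i = j + 1 then QQ p N a (int j) else 0)
     + (if 1 \<le> i \<and> i = j + p + 2 then a (i - 1) * QQ p N a (int j) else 0)"
    using ij by (auto simp: BB_entry)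
  finally show ?thesis .
qed

lemma BL_entry:
  assumes ij: "i < N+2" "j < N+2"
  shows "(BB p N a * L1 p N a) $$ (i,j) = (if p + 1 \<le> i then QQ p N a (int (i - p - 1)) * L1 p N a $$ (i - p - 1, j) else 0)"
proof -
  have "(BB p N a * L1 p N a) $$ (i,j) = (\<Sum>m<N+2. BB p N a $$ (i,m) * L1 p N a $$ (m,j))"
    by (rule mult_entry[OF BB_carrier L1_carrier ij])
  also have "\<dots> = (\<Sum>m<N+2. (if m = i - p - 1 \<and> p + 1 \<le> i then QQ p N a (int m) * L1 p N a $$ (m,j) else 0))"
    by (rule sum.cong) (use ij in \<open>auto simp: BB_entry\<close>)
  also have "\<dots> = (if p + 1 \<le> i then QQ p N a (int (i - p - 1)) * L1 p N a $$ (i - p - 1, j) else 0)"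
    using ij by (auto simp: sum_delta_if)
  finally show ?thesis .
qed

lemma lax_entry:
  assumes ij: "i < N+2" "j < N+2"
  shows "(L1 p N a * BB p N a - BB p N a * L1 p N a) $$ (i,j)
    = (if i = j + 1 then a j * ((\<Prod>k=1..p. zext N a (int j + int k)) - (\<Prod>k=1..p. zext N a (int j - int k))) else 0)"
proof -
  have e: "(L1 p N a * BB p N a - BB p N a * L1 p N a) $$ (i,j) = (L1 p N a * BB p N a) $$ (i,j) - (BB p N a * L1 p N a) $$ (i,j)"
    by (rule index_minus_mat(1)) (use ij BB_carrier[of p N a] L1_carrier[of p N a] in auto)
  show ?thesis
  proof (cases "i = j + 1")
    case True
    have jN: "j \<le> N" using ij True by simp
    have z: "zext N a (int j) = a j" using jN by (simp add: zext_def)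
    have lb: "(L1 p N a * BB p N a) $$ (i,j) = QQ p N a (int j)"
    proof (cases "i + p \<le> N + 1")
      case True thus ?thesis using \<open>i = j+1\<close> ij by (simp add: LB_entry)
    next
      case False
      hence "int N < int j + int p" using \<open>i = j+1\<close> by simp
      thus ?thesis using False \<open>i = j+1\<close> ij by (simp add: LB_entry QQ_big)
    qed
    have bl: "(BB p N a * L1 p N a) $$ (i,j) = QQ p N a (int j - int p)"
    proof (cases "p \<le> j")
      case True
      have "L1 p N a $$ (j - p, j) = 1" using True ij jN p1 by (auto simp: L1_row)
      moreover have "int (j - p) = int j - int p" using True by simp
      ultimately show ?thesis using True \<open>i = j+1\<close> ij by (simp add: BL_entry)
    next
      case False
      thus ?thesis using \<open>i = j+1\<close> ij by (simp add: BL_entry QQ_neg)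
    qed
    show ?thesis unfolding e lb bl QQ_refl using True QQ_split[of a "int j"] z
      by (simp add: algebra_simps)
  next
    case False
    note ne = False
    show ?thesis
    proof (cases "i = j + p + 2")
      case True
      have lb: "(L1 p N a * BB p N a) $$ (i,j) = a (j + p + 1) * QQ p N a (int j)"
        using True ne ij by (simp add: LB_entry)
      have "L1 p N a $$ (j + 1, j) = a j" using True ij p1 by (simp add: L1_row)
      hence bl: "(BB p N a * L1 p N a) $$ (i,j) = QQ p N a (int (j + 1)) * a j"
        using True ij by (simp add: BL_entry)
      have "j + p + 1 \<le> N" using True ij by simp
      thus ?thesis unfolding e lb bl using QQ_shift[of j a] ne by simp
    next
      case False
      have lb: "(L1 p N a * BB p N a) $$ (i,j) = 0" using False ne ij by (simp add: LB_entry)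
      have bl: "(BB p N a * L1 p N a) $$ (i,j) = 0"
      proof (cases "p + 1 \<le> i")
        case True
        have "L1 p N a $$ (i - p - 1, j) = 0" using True False ne ij by (auto simp: L1_row)
        thus ?thesis using True ij by (simp add: BL_entry)
      next
        case False thus ?thesis using ij by (simp add: BL_entry)
      qed
      show ?thesis unfolding e lb bl using ne by simp
    qed
  qed
qed

lemma L1_mder:
  assumes sol: "sol_a p N T a" and t: "t \<in> tdom T"
  shows "mder (tdom T) (N+2) (\<lambda>s. L1 p N (\<lambda>k. a k s))
     (L1 p N (\<lambda>k. a k t) * BB p N (\<lambda>k. a k t) - BB p N (\<lambda>k. a k t) * L1 p N (\<lambda>k. a k t)) t"
  unfolding mder_def
proof (intro allI impI)
  fix i j assume i: "i < N+2" and j: "j < N+2"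
  have f: "(\<lambda>s. L1 p N (\<lambda>k. a k s) $$ (i,j)) = (\<lambda>s. (if j = i + p \<and> i \<le> N + 1 - p then 1 else 0) + (if i = j + 1 \<and> j \<le> N then a j s else 0))"
    using i j unfolding L1_def by simp
  show "((\<lambda>s. L1 p N (\<lambda>k. a k s) $$ (i,j)) has_real_derivative
      (L1 p N (\<lambda>k. a k t) * BB p N (\<lambda>k. a k t) - BB p N (\<lambda>k. a k t) * L1 p N (\<lambda>k. a k t)) $$ (i,j)) (at t within tdom T)"
  proof (cases "i = j + 1")
    case True
    hence jN: "j \<le> N" using i by simp
    have d: "((\<lambda>s. a j s) has_real_derivative a j t * ((\<Prod>k=1..p. zext N (\<lambda>k. a k t) (int j + int k))
           - (\<Prod>k=1..p. zext N (\<lambda>k. a k t) (int j - int k)))) (at t within tdom T)"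
      using sol t jN unfolding sol_a_def by blast
    have "((\<lambda>s. (if j = i + p \<and> i \<le> N + 1 - p then 1 else 0) + a j s) has_real_derivative 0 + a j t * ((\<Prod>k=1..p. zext N (\<lambda>k. a k t) (int j + int k))
           - (\<Prod>k=1..p. zext N (\<lambda>k. a k t) (int j - int k)))) (at t within tdom T)"
      by (rule DERIV_add[OF DERIV_const d])
    thus ?thesis unfolding f lax_entry[OF i j] using True jN by simp
  next
    case False
    show ?thesis unfolding f lax_entry[OF i j] using False by simp
  qed
qed

definition Mu :: "(nat \<Rightarrow> real) \<Rightarrow> nat \<Rightarrow> nat \<Rightarrow> real" where
  "Mu a k m = (L1 p N a ^\<^sub>m Suc p) $$ (k,m) - BB p N a $$ (k,m) - (if m = k then (\<Prod>s<p. a s) else 0)"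

lemma uu_der:
  assumes sol: "sol_a p N T a" and t: "t \<in> tdom T" and k: "k < N+2"
  shows "((\<lambda>s. uu p N (\<lambda>k. a k s) j k) has_real_derivative
     (\<Sum>m<N+2. Mu (\<lambda>k. a k t) k m * uu p N (\<lambda>k. a k t) j m)) (at t within tdom T)"
proof -
  define A where "A = L1 p N (\<lambda>k. a k t)"
  define B where "B = BB p N (\<lambda>k. a k t)"
  have A: "A \<in> carrier_mat (N+2) (N+2)" unfolding A_def by (rule L1_carrier)
  have B: "B \<in> carrier_mat (N+2) (N+2)" unfolding B_def by (rule BB_carrier)
  have md: "mder (tdom T) (N+2) (\<lambda>s. L1 p N (\<lambda>k. a k s) ^\<^sub>m j) (A ^\<^sub>m j * B - B * A ^\<^sub>m j) t"
    unfolding A_def B_def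
    by (rule mder_pow[OF L1_carrier BB_carrier L1_mder[OF sol t]])
  have z: "0 < N+2" by simp
  have d0: "((\<lambda>s. uu p N (\<lambda>k. a k s) j k) has_real_derivative (A ^\<^sub>m j * B - B * A ^\<^sub>m j) $$ (k,0)) (at t within tdom T)"
    using md k unfolding mder_def uu_def by simp
  have "(A ^\<^sub>m j * B - B * A ^\<^sub>m j) $$ (k,0) = (A ^\<^sub>m j * B) $$ (k,0) - (B * A ^\<^sub>m j) $$ (k,0)"
    by (rule index_minus_mat(1)) (use k A B in auto)
  also have "(A ^\<^sub>m j * B) $$ (k,0) = (\<Sum>m<N+2. (A ^\<^sub>m j) $$ (k,m) * B $$ (m,0))"
    by (rule mult_entry) (use A B k in auto)
  also have "\<dots> = (\<Sum>m<N+2. (A ^\<^sub>m j) $$ (k,m) * (A ^\<^sub>m Suc p) $$ (m,0)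
        - (if m = 0 then (A ^\<^sub>m j) $$ (k,m) * (\<Prod>s<p. a s t) else 0))"
    by (rule sum.cong) (auto simp: B_def A_def BB_col0 uu_def algebra_simps)
  also have "\<dots> = (\<Sum>m<N+2. (A ^\<^sub>m j) $$ (k,m) * (A ^\<^sub>m Suc p) $$ (m,0)) - (A ^\<^sub>m j) $$ (k,0) * (\<Prod>s<p. a s t)"
    by (simp add: sum_subtractf sum.delta del: pow_mat.simps)
  also have "(\<Sum>m<N+2. (A ^\<^sub>m j) $$ (k,m) * (A ^\<^sub>m Suc p) $$ (m,0)) = (\<Sum>m<N+2. (A ^\<^sub>m Suc p) $$ (k,m) * (A ^\<^sub>m j) $$ (m,0))"
  proof -
    have "(\<Sum>m<N+2. (A ^\<^sub>m j) $$ (k,m) * (A ^\<^sub>m Suc p) $$ (m,0)) = (A ^\<^sub>m (j + Suc p)) $$ (k,0)"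
      by (rule pow_add_entry[OF A k z, symmetric])
    also have "j + Suc p = Suc p + j" by simp
    also have "(A ^\<^sub>m (Suc p + j)) $$ (k,0) = (\<Sum>m<N+2. (A ^\<^sub>m Suc p) $$ (k,m) * (A ^\<^sub>m j) $$ (m,0))"
      by (rule pow_add_entry[OF A k z])
    finally show ?thesis .
  qed
  also have "(B * A ^\<^sub>m j) $$ (k,0) = (\<Sum>m<N+2. B $$ (k,m) * (A ^\<^sub>m j) $$ (m,0))"
    by (rule mult_entry) (use A B k in auto)
  finally have e: "(A ^\<^sub>m j * B - B * A ^\<^sub>m j) $$ (k,0) =
     (\<Sum>m<N+2. (A ^\<^sub>m Suc p) $$ (k,m) * (A ^\<^sub>m j) $$ (m,0)) - (A ^\<^sub>m j) $$ (k,0) * (\<Prod>s<p. a s t)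
     - (\<Sum>m<N+2. B $$ (k,m) * (A ^\<^sub>m j) $$ (m,0))" .
  have "(\<Sum>m<N+2. Mu (\<lambda>k. a k t) k m * uu p N (\<lambda>k. a k t) j m)
     = (\<Sum>m<N+2. (A ^\<^sub>m Suc p) $$ (k,m) * (A ^\<^sub>m j) $$ (m,0) - B $$ (k,m) * (A ^\<^sub>m j) $$ (m,0)
         - (if m = k then (\<Prod>s<p. a s t) * (A ^\<^sub>m j) $$ (m,0) else 0))"
    by (rule sum.cong) (auto simp: Mu_def A_def B_def uu_def algebra_simps)
  also have "\<dots> = (A ^\<^sub>m j * B - B * A ^\<^sub>m j) $$ (k,0)"
  proof -
    have s3: "(\<Sum>m<N+2. (if m = k then (\<Prod>s<p. a s t) * (A ^\<^sub>m j) $$ (m,0) else 0)) = (\<Prod>s<p. a s t) * (A ^\<^sub>m j) $$ (k,0)"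
      using k by (simp only: sum.delta finite_lessThan lessThan_iff if_True)
    show ?thesis unfolding e sum_subtractf s3 by (simp add: algebra_simps del: sum.lessThan_Suc)
  qed
  finally show ?thesis using d0 by simp
qed

lemma rr_der:
  assumes sol: "sol_a p N T a" and t: "t \<in> tdom T" and m: "m < N+2"
  shows "((\<lambda>s. rr p N (\<lambda>k. a k s) i m) has_real_derivative
     (\<Sum>x<N+2. BB p N (\<lambda>k. a k t) $$ (x, m) * rr p N (\<lambda>k. a k t) i x)) (at t within tdom T)"
proof -
  define A where "A = L1 p N (\<lambda>k. a k t)"
  define B where "B = BB p N (\<lambda>k. a k t)"
  have A: "A \<in> carrier_mat (N+2) (N+2)" unfolding A_def by (rule L1_carrier)
  have B: "B \<in> carrier_mat (N+2) (N+2)" unfolding B_def by (rule BB_carrier)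
  have l: "i mod p < N+2"
  proof -
    have "i mod p < p" using p1 by simp
    thus ?thesis using pN by linarith
  qed
  have md: "mder (tdom T) (N+2) (\<lambda>s. L1 p N (\<lambda>k. a k s) ^\<^sub>m (i div p)) (A ^\<^sub>m (i div p) * B - B * A ^\<^sub>m (i div p)) t"
    unfolding A_def B_def
    by (rule mder_pow[OF L1_carrier BB_carrier L1_mder[OF sol t]])
  have d0: "((\<lambda>s. rr p N (\<lambda>k. a k s) i m) has_real_derivative (A ^\<^sub>m (i div p) * B - B * A ^\<^sub>m (i div p)) $$ (i mod p, m)) (at t within tdom T)"
    using md l m unfolding mder_def rr_def by simp
  have "(A ^\<^sub>m (i div p) * B - B * A ^\<^sub>m (i div p)) $$ (i mod p, m)
      = (A ^\<^sub>m (i div p) * B) $$ (i mod p, m) - (B * A ^\<^sub>m (i div p)) $$ (i mod p, m)"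
    by (rule index_minus_mat(1)) (use l m A B in auto)
  also have "(A ^\<^sub>m (i div p) * B) $$ (i mod p, m) = (\<Sum>x<N+2. (A ^\<^sub>m (i div p)) $$ (i mod p, x) * B $$ (x,m))"
    by (rule mult_entry) (use A B l m in auto)
  also have "(B * A ^\<^sub>m (i div p)) $$ (i mod p, m) = (\<Sum>x<N+2. B $$ (i mod p, x) * (A ^\<^sub>m (i div p)) $$ (x,m))"
    by (rule mult_entry) (use A B l m in auto)
  also have "\<dots> = 0"
  proof (rule sum.neutral, intro ballI)
    fix x assume "x \<in> {..<N+2}"
    moreover have "i mod p < p" using p1 by simp
    ultimately show "B $$ (i mod p, x) * (A ^\<^sub>m (i div p)) $$ (x,m) = 0"
      using l unfolding B_def by (simp add: BB_entry)
  qed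
  finally show ?thesis using d0 by (simp add: rr_def A_def B_def mult_ac)
qed

end


declare sum.lessThan_Suc[simp del] prod.lessThan_Suc[simp del]

lemma tdom0: "0 < T \<Longrightarrow> (0::real) \<in> tdom T"
  unfolding tdom_def by (simp add: zero_ereal_def)

lemma set_conv: "{0..N+1} = {..<N+2}" for N :: nat by auto

lemma sol_a_nz: "sol_a p N T a \<Longrightarrow> t \<in> tdom T \<Longrightarrow> i \<le> N \<Longrightarrow> a i t \<noteq> 0"
  unfolding sol_a_def by blast

lemma part1:
  fixes p N :: nat and T :: ereal
  assumes p1: "p \<ge> 1" and pN: "p \<le> N" and T0: "0 < T"
  shows "\<forall>a C. sol_a p N T a
       \<and> (\<forall>t\<in>tdom T. \<forall>i j. j \<ge> N + 2 \<longrightarrow>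
             alpha p N (\<lambda>k. a k t) i j
               = (\<Sum>v=0..N+1. C v t * alpha p N (\<lambda>k. a k t) i (j - v - 1)))
       \<longrightarrow> (\<forall>v\<le>N+1. \<forall>t\<in>tdom T. C v t = C v 0)"
proof (intro allI impI ballI, elim conjE)
  fix a C v t
  assume sol: "sol_a p N T a"
    and hyp: "\<forall>t\<in>tdom T. \<forall>i j. j \<ge> N + 2 \<longrightarrow>
             alpha p N (\<lambda>k. a k t) i j
               = (\<Sum>v=0..N+1. C v t * alpha p N (\<lambda>k. a k t) i (j - v - 1))"
    and v: "v \<le> N + 1" and t: "t \<in> tdom T"
  have rec: "uu p N (\<lambda>k. a k s) (N+2) k = (\<Sum>v<N+2. C v s * uu p N (\<lambda>k. a k s) (N + 2 - v - 1) k)"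
    if s: "s \<in> tdom T" and k: "k < N+2" for s k
  proof -
    let ?r = "rr p N (\<lambda>k. a k s)" and ?u = "uu p N (\<lambda>k. a k s)"
    have "(\<Sum>m<N+2. ?r i m * (?u (N+2) m - (\<Sum>v<N+2. C v s * ?u (N + 2 - v - 1) m))) = 0"
      if i: "i < N+2" for i
    proof -
      have h: "alpha p N (\<lambda>k. a k s) i (N+2) = (\<Sum>v<N+2. C v s * alpha p N (\<lambda>k. a k s) i (N + 2 - v - 1))"
        using hyp s unfolding set_conv by auto
      have "(\<Sum>v<N+2. C v s * alpha p N (\<lambda>k. a k s) i (N + 2 - v - 1))
          = (\<Sum>v<N+2. \<Sum>m<N+2. C v s * (?r i m * ?u (N + 2 - v - 1) m))"
        by (simp add: alpha_dot[OF p1 pN] sum_distrib_left)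
      also have "\<dots> = (\<Sum>m<N+2. \<Sum>v<N+2. C v s * (?r i m * ?u (N + 2 - v - 1) m))"
        by (rule sum.swap)
      also have "\<dots> = (\<Sum>m<N+2. ?r i m * (\<Sum>v<N+2. C v s * ?u (N + 2 - v - 1) m))"
        by (simp add: sum_distrib_left mult_ac)
      finally have "(\<Sum>m<N+2. ?r i m * ?u (N+2) m) = (\<Sum>m<N+2. ?r i m * (\<Sum>v<N+2. C v s * ?u (N + 2 - v - 1) m))"
        using h by (simp add: alpha_dot[OF p1 pN])
      thus ?thesis by (simp add: right_diff_distrib sum_subtractf)
    qed
    hence "?u (N+2) k - (\<Sum>v<N+2. C v s * ?u (N + 2 - v - 1) k) = 0"
      using tri_zero2[of "N+2" ?r "\<lambda>m. ?u (N+2) m - (\<Sum>v<N+2. C v s * ?u (N + 2 - v - 1) m)" k]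
        rr_diag[OF p1 pN] rr_tri[OF p1 pN] k by simp
    thus ?thesis by simp
  qed
  show "C v t = C v 0"
  proof (rule gen_const[where S="tdom T" and n="N+2" and w="\<lambda>j s k. uu p N (\<lambda>k. a k s) j k"
        and M="\<lambda>s k m. Mu p N (\<lambda>k. a k s) k m" and c=C])
    show "convex (tdom T)" by (rule tdom_convex)
    show "\<And>t. t \<in> tdom T \<Longrightarrow> at t within tdom T \<noteq> bot" by (rule tdom_nb)
    show "\<And>t i k. t \<in> tdom T \<Longrightarrow> i \<le> N+2 \<Longrightarrow> k < N+2 \<Longrightarrow>
        ((\<lambda>s. uu p N (\<lambda>k. a k s) i k) has_real_derivative (\<Sum>m<N+2. Mu p N (\<lambda>k. a k t) k m * uu p N (\<lambda>k. a k t) i m)) (at t within tdom T)"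
      using uu_der[OF p1 pN sol] by blast
    show "\<And>t i. t \<in> tdom T \<Longrightarrow> i < N+2 \<Longrightarrow> uu p N (\<lambda>k. a k t) i i \<noteq> 0"
    proof -
      fix t i assume t: "t \<in> tdom T" and i: "i < N+2"
      have "(\<Prod>s<i. a s t) \<noteq> 0" using sol_a_nz[OF sol t] i by (simp add: prod_zero_iff)
      thus "uu p N (\<lambda>k. a k t) i i \<noteq> 0" using uu_diag[OF p1 pN i] by simp
    qed
    show "\<And>t i k. t \<in> tdom T \<Longrightarrow> i < k \<Longrightarrow> k < N+2 \<Longrightarrow> uu p N (\<lambda>k. a k t) i k = 0"
      using uu_tri[OF p1 pN] by blast
    show "\<And>t k. t \<in> tdom T \<Longrightarrow> k < N+2 \<Longrightarrow>
        uu p N (\<lambda>k. a k t) (N+2) k = (\<Sum>v<N+2. C v t * uu p N (\<lambda>k. a k t) (N + 2 - v - 1) k)"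
      using rec by blast
  qed (use v t tdom0[OF T0] in auto)
qed

lemma part2:
  fixes p N :: nat and T :: ereal
  assumes p1: "p \<ge> 1" and pN: "p \<le> N" and T0: "0 < T"
  shows "\<forall>a D. sol_a p N T a
       \<and> (\<forall>t\<in>tdom T. \<forall>i j. i \<ge> N + 2 \<longrightarrow>
             alpha p N (\<lambda>k. a k t) i j
               = (\<Sum>v=0..N+1. D v t * alpha p N (\<lambda>k. a k t) (i - v - 1) j))
       \<longrightarrow> (\<forall>v\<le>N+1. \<forall>t\<in>tdom T. D v t = D v 0)"
proof (intro allI impI ballI, elim conjE)
  fix a D v t
  assume sol: "sol_a p N T a"
    and hyp: "\<forall>t\<in>tdom T. \<forall>i j. i \<ge> N + 2 \<longrightarrow>
             alpha p N (\<lambda>k. a k t) i j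
               = (\<Sum>v=0..N+1. D v t * alpha p N (\<lambda>k. a k t) (i - v - 1) j)"
    and v: "v \<le> N + 1" and t: "t \<in> tdom T"
  have rec: "rr p N (\<lambda>k. a k s) (N+2) k = (\<Sum>v<N+2. D v s * rr p N (\<lambda>k. a k s) (N + 2 - v - 1) k)"
    if s: "s \<in> tdom T" and k: "k < N+2" for s k
  proof -
    let ?r = "rr p N (\<lambda>k. a k s)" and ?u = "uu p N (\<lambda>k. a k s)"
    have "(\<Sum>m<N+2. ?u j m * (?r (N+2) m - (\<Sum>v<N+2. D v s * ?r (N + 2 - v - 1) m))) = 0"
      if j: "j < N+2" for j
    proof -
      have h: "alpha p N (\<lambda>k. a k s) (N+2) j = (\<Sum>v<N+2. D v s * alpha p N (\<lambda>k. a k s) (N + 2 - v - 1) j)"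
        using hyp s unfolding set_conv by auto
      have "(\<Sum>v<N+2. D v s * alpha p N (\<lambda>k. a k s) (N + 2 - v - 1) j)
          = (\<Sum>v<N+2. \<Sum>m<N+2. D v s * (?r (N + 2 - v - 1) m * ?u j m))"
        by (simp add: alpha_dot[OF p1 pN] sum_distrib_left)
      also have "\<dots> = (\<Sum>m<N+2. \<Sum>v<N+2. D v s * (?r (N + 2 - v - 1) m * ?u j m))"
        by (rule sum.swap)
      also have "\<dots> = (\<Sum>m<N+2. ?u j m * (\<Sum>v<N+2. D v s * ?r (N + 2 - v - 1) m))"
        by (simp add: sum_distrib_left mult_ac)
      finally have "(\<Sum>m<N+2. ?u j m * ?r (N+2) m) = (\<Sum>m<N+2. ?u j m * (\<Sum>v<N+2. D v s * ?r (N + 2 - v - 1) m))"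
        using h by (simp add: alpha_dot[OF p1 pN] mult_ac)
      thus ?thesis by (simp add: right_diff_distrib sum_subtractf)
    qed
    moreover have "?u j j \<noteq> 0" if j: "j < N+2" for j
    proof -
      have "(\<Prod>i<j. a i s) \<noteq> 0" using sol_a_nz[OF sol s] j by (simp add: prod_zero_iff)
      thus ?thesis using uu_diag[OF p1 pN j] by simp
    qed
    ultimately have "?r (N+2) k - (\<Sum>v<N+2. D v s * ?r (N + 2 - v - 1) k) = 0"
      using tri_zero2[of "N+2" ?u "\<lambda>m. ?r (N+2) m - (\<Sum>v<N+2. D v s * ?r (N + 2 - v - 1) m)" k]
        uu_tri[OF p1 pN] k by blast
    thus ?thesis by simp
  qed
  show "D v t = D v 0"
  proof (rule gen_const[where S="tdom T" and n="N+2" and w="\<lambda>j s k. rr p N (\<lambda>k. a k s) j k"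
        and M="\<lambda>s k m. BB p N (\<lambda>k. a k s) $$ (m, k)" and c=D])
    show "convex (tdom T)" by (rule tdom_convex)
    show "\<And>t. t \<in> tdom T \<Longrightarrow> at t within tdom T \<noteq> bot" by (rule tdom_nb)
    show "\<And>t i k. t \<in> tdom T \<Longrightarrow> i \<le> N+2 \<Longrightarrow> k < N+2 \<Longrightarrow>
        ((\<lambda>s. rr p N (\<lambda>k. a k s) i k) has_real_derivative (\<Sum>m<N+2. BB p N (\<lambda>k. a k t) $$ (m, k) * rr p N (\<lambda>k. a k t) i m)) (at t within tdom T)"
      using rr_der[OF p1 pN sol] by blast
    show "\<And>t i. t \<in> tdom T \<Longrightarrow> i < N+2 \<Longrightarrow> rr p N (\<lambda>k. a k t) i i \<noteq> 0"
      using rr_diag[OF p1 pN] by simp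
    show "\<And>t i k. t \<in> tdom T \<Longrightarrow> i < k \<Longrightarrow> k < N+2 \<Longrightarrow> rr p N (\<lambda>k. a k t) i k = 0"
      using rr_tri[OF p1 pN] by blast
    show "\<And>t k. t \<in> tdom T \<Longrightarrow> k < N+2 \<Longrightarrow>
        rr p N (\<lambda>k. a k t) (N+2) k = (\<Sum>v<N+2. D v t * rr p N (\<lambda>k. a k t) (N + 2 - v - 1) k)"
      using rec by blast
  qed (use v t tdom0[OF T0] in auto)
qed


definition rho :: "nat \<Rightarrow> nat \<Rightarrow> (nat \<Rightarrow> real) \<Rightarrow> nat \<Rightarrow> nat \<Rightarrow> real" where
  "rho p N b k m = (L2 p N b ^\<^sub>m k) $$ (0, m)"

definition cc :: "nat \<Rightarrow> nat \<Rightarrow> (nat \<Rightarrow> real) \<Rightarrow> nat \<Rightarrow> nat \<Rightarrow> real" where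
  "cc p N b j m = (L2 p N b ^\<^sub>m (j div p)) $$ (m, j mod p)"

definition dd :: "nat \<Rightarrow> nat \<Rightarrow> (nat \<Rightarrow> real) \<Rightarrow> nat \<Rightarrow> real" where
  "dd p N b i = (\<Sum>s=0..p. zext N b (int i - int s))"

definition UU :: "nat \<Rightarrow> nat \<Rightarrow> (nat \<Rightarrow> real) \<Rightarrow> real mat" where
  "UU p N b = Matrix.mat (N+p+1) (N+p+1) (\<lambda>(i,j). (if j = i + p + 1 then 1 else 0) + (if i = j then dd p N b i else 0))"

lemma L2_carrier: "L2 p N b \<in> carrier_mat (N+p+1) (N+p+1)"
  unfolding L2_def by simp

lemma UU_carrier: "UU p N b \<in> carrier_mat (N+p+1) (N+p+1)"
  unfolding UU_def by simp

lemma UU_entry: "i < N+p+1 \<Longrightarrow> j < N+p+1 \<Longrightarrow>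
  UU p N b $$ (i,j) = (if j = i + p + 1 then 1 else 0) + (if i = j then dd p N b i else 0)"
  unfolding UU_def by simp

context
  fixes p N :: nat
  assumes p1: "1 \<le> p" and N1: "1 \<le> N"
begin

lemma L2_row:
  assumes "i < N+p+1" "m < N+p+1"
  shows "L2 p N b $$ (i,m) = (if m = i + 1 \<and> i + 1 \<le> N + p then 1 else 0) + (if m = i - p \<and> p \<le> i then b m else 0)"
  using assms unfolding L2_def by auto

lemma L2_col:
  assumes "i < N+p+1" "m < N+p+1"
  shows "L2 p N b $$ (i,m) = (if i = m - 1 \<and> 1 \<le> m then 1 else 0) + (if i = m + p \<and> m \<le> N then b m else 0)"
  using assms unfolding L2_def by auto

lemma rho_Suc:
  assumes m: "m < N+p+1"
  shows "rho p N b (Suc k) m = (if 1 \<le> m then rho p N b k (m - 1) else 0) + (if m \<le> N then b m * rho p N b k (m + p) else 0)"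
proof -
  have "rho p N b (Suc k) m = (\<Sum>x<N+p+1. rho p N b k x * L2 p N b $$ (x, m))"
    unfolding rho_def by (rule pow_Suc_right_entry[OF L2_carrier]) (use m in auto)
  also have "\<dots> = (\<Sum>x<N+p+1. (if x = m - 1 \<and> 1 \<le> m then rho p N b k x else 0)
      + (if x = m + p \<and> m \<le> N then b m * rho p N b k x else 0))"
    by (rule sum.cong) (use m in \<open>auto simp: L2_col\<close>)
  also have "\<dots> = (if 1 \<le> m then rho p N b k (m - 1) else 0) + (if m \<le> N then b m * rho p N b k (m + p) else 0)"
    using m by (auto simp: sum.distrib sum_delta_if)
  finally show ?thesis .
qed

lemma rho_0: "m < N+p+1 \<Longrightarrow> rho p N b 0 m = (if m = 0 then 1 else 0)"
  unfolding rho_def L2_def by simp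

lemma rho_tri: "k < m \<Longrightarrow> m < N+p+1 \<Longrightarrow> rho p N b k m = 0"
proof (induction k arbitrary: m)
  case 0 thus ?case by (simp add: rho_0)
next
  case (Suc k)
  show ?case using Suc.prems Suc.IH[of "m - 1"] Suc.IH[of "m + p"] by (simp add: rho_Suc)
qed

lemma rho_diag: "k < N+p+1 \<Longrightarrow> rho p N b k k = 1"
proof (induction k)
  case 0 thus ?case by (simp add: rho_0)
next
  case (Suc k)
  show ?case using Suc rho_tri[of k "Suc k + p"] by (simp add: rho_Suc)
qed

lemma rho_small: "k \<le> p \<Longrightarrow> m < N+p+1 \<Longrightarrow> rho p N b k m = (if m = k then 1 else 0)"
proof (induction k arbitrary: m)
  case 0 thus ?case by (simp add: rho_0)
next
  case (Suc k)
  have "m + p \<noteq> k" using Suc.prems by auto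
  thus ?case using Suc.prems Suc.IH[of "m - 1"] Suc.IH[of "m + p"] by (auto simp: rho_Suc)
qed

lemma rho_p1: "m < N+p+1 \<Longrightarrow> rho p N b (Suc p) m = (if m = p + 1 then 1 else 0) + (if m = 0 then b 0 else 0)"
  using p1 by (auto simp: rho_Suc rho_small)

lemma cc_step:
  assumes m: "m < N+p+1"
  shows "cc p N b (j + p) m = (if m + 1 \<le> N + p then cc p N b j (m + 1) else 0) + (if p \<le> m then b (m - p) * cc p N b j (m - p) else 0)"
proof -
  have d: "(j + p) div p = Suc (j div p)" "(j + p) mod p = j mod p" using p1 by auto
  have l: "j mod p < N+p+1"
  proof -
    have "j mod p < p" using p1 by simp
    thus ?thesis by linarith
  qed
  have "cc p N b (j + p) m = (\<Sum>x<N+p+1. L2 p N b $$ (m, x) * cc p N b j x)"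
    unfolding cc_def d by (rule pow_Suc_left_entry[OF L2_carrier]) (use l m in auto)
  also have "\<dots> = (\<Sum>x<N+p+1. (if x = m + 1 \<and> m + 1 \<le> N + p then cc p N b j x else 0)
      + (if x = m - p \<and> p \<le> m then b x * cc p N b j x else 0))"
    by (rule sum.cong) (use m in \<open>auto simp: L2_row\<close>)
  also have "\<dots> = (if m + 1 \<le> N + p then cc p N b j (m + 1) else 0) + (if p \<le> m then b (m - p) * cc p N b j (m - p) else 0)"
    using m by (auto simp: sum.distrib sum_delta_if)
  finally show ?thesis .
qed

lemma cc_small: "j < p \<Longrightarrow> m < N+p+1 \<Longrightarrow> cc p N b j m = (if m = j then 1 else 0)"
proof -
  assume h: "j < p" "m < N+p+1"
  hence "j < N+p+1" by linarith
  thus ?thesis unfolding cc_def L2_def using h by simp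
qed

lemma cc_tri_diag:
  assumes bnz: "\<forall>i\<le>N. b i \<noteq> 0"
  shows "j < N+p+1 \<Longrightarrow> cc p N b j j \<noteq> 0 \<and> (\<forall>m. j < m \<and> m < N+p+1 \<longrightarrow> cc p N b j m = 0)"
proof (induction j rule: less_induct)
  case (less j)
  show ?case
  proof (cases "j < p")
    case True thus ?thesis using less.prems by (simp add: cc_small)
  next
    case False
    define j' where "j' = j - p"
    have jj: "j = j' + p" using False unfolding j'_def by simp
    have IH: "cc p N b j' j' \<noteq> 0" "\<And>m. j' < m \<Longrightarrow> m < N+p+1 \<Longrightarrow> cc p N b j' m = 0"
      using less.IH[of j'] less.prems p1 jj by auto
    have "j' \<le> N" using less.prems jj by simp
    hence "b j' \<noteq> 0" using bnz by simp
    hence "cc p N b j j \<noteq> 0"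
      unfolding jj using less.prems IH jj by (auto simp: cc_step)
    moreover have "\<forall>m. j < m \<and> m < N+p+1 \<longrightarrow> cc p N b j m = 0"
      unfolding jj using less.prems IH jj by (auto simp: cc_step)
    ultimately show ?thesis by blast
  qed
qed

lemma St_dot: "(\<Sum>m<N+p+1. rho p N b K m * cc p N b j m) = St p N b (j mod p + 1) (K + j div p)"
proof -
  have l: "j mod p < N+p+1"
  proof -
    have "j mod p < p" using p1 by simp
    thus ?thesis by linarith
  qed
  have e: "j mod p + 1 - 1 = j mod p" by simp
  show ?thesis
    unfolding St_def rho_def cc_def e
    by (rule pow_add_entry[OF L2_carrier, symmetric]) (use l in auto)
qed

lemma dd_Suc: "dd p N b (Suc i) = dd p N b i + zext N b (int i + 1) - zext N b (int i - int p)"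
proof -
  obtain p' where pp: "p = Suc p'" using p1 by (cases p) auto
  have a: "dd p N b (Suc i) = zext N b (int i + 1) + (\<Sum>s=0..p'. zext N b (int i - int s))"
    unfolding dd_def pp by (subst sum.atLeast0_atMost_Suc_shift) (simp add: algebra_simps)
  have b: "dd p N b i = (\<Sum>s=0..p'. zext N b (int i - int s)) + zext N b (int i - int p)"
    unfolding dd_def pp by (subst sum.atLeast0_atMost_Suc) simp
  show ?thesis using a b by simp
qed

lemma dd_plus: "dd p N b (j + p) = zext N b (int j) + (\<Sum>k=1..p. zext N b (int j + int k))"
proof -
  have "dd p N b (j + p) = (\<Sum>k=0..p. zext N b (int j + int k))"
    unfolding dd_def
    by (rule sum.reindex_bij_witness[of _ "\<lambda>k. p - k" "\<lambda>k. p - k"]) (auto simp: of_nat_diff algebra_simps)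
  also have "{0..p} = insert 0 {1..p}" by auto
  finally show ?thesis by simp
qed

lemma dd_split: "dd p N b j = zext N b (int j) + (\<Sum>k=1..p. zext N b (int j - int k))"
proof -
  have "{0..p} = insert 0 {1..p}" by auto
  thus ?thesis unfolding dd_def by simp
qed

lemma dd_0: "dd p N b 0 = b 0"
proof -
  have "(\<Sum>k=1..p. zext N b (int 0 - int k)) = 0" by (rule sum.neutral) (auto simp: zext_def)
  thus ?thesis using dd_split[of b 0] by (simp add: zext_def)
qed

lemma UU_row0: "m < N+p+1 \<Longrightarrow> UU p N b $$ (0, m) = rho p N b (Suc p) m"
  using p1 by (auto simp: UU_entry rho_p1 dd_0)

lemma UL_entry:
  assumes ij: "i < N+p+1" "j < N+p+1"
  shows "(UU p N b * L2 p N b) $$ (i,j) = (if i + p + 1 < N+p+1 then L2 p N b $$ (i+p+1, j) else 0) + dd p N b i * L2 p N b $$ (i,j)"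
proof -
  have "(UU p N b * L2 p N b) $$ (i,j) = (\<Sum>m<N+p+1. UU p N b $$ (i,m) * L2 p N b $$ (m,j))"
    by (rule mult_entry[OF UU_carrier L2_carrier ij])
  also have "\<dots> = (\<Sum>m<N+p+1. (if m = i + p + 1 \<and> True then L2 p N b $$ (m,j) else 0)
      + (if m = i \<and> True then dd p N b i * L2 p N b $$ (m,j) else 0))"
    by (rule sum.cong) (use ij in \<open>auto simp: UU_entry\<close>)
  also have "\<dots> = (if i + p + 1 < N+p+1 then L2 p N b $$ (i+p+1, j) else 0) + dd p N b i * L2 p N b $$ (i,j)"
    unfolding sum.distrib sum_delta_if using ij by simp
  finally show ?thesis .
qed

lemma LU_entry:
  assumes ij: "i < N+p+1" "j < N+p+1"
  shows "(L2 p N b * UU p N b) $$ (i,j) = (if i + 1 \<le> N + p then UU p N b $$ (i+1, j) else 0)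
     + (if p \<le> i then b (i - p) * UU p N b $$ (i - p, j) else 0)"
proof -
  have "(L2 p N b * UU p N b) $$ (i,j) = (\<Sum>m<N+p+1. L2 p N b $$ (i,m) * UU p N b $$ (m,j))"
    by (rule mult_entry[OF L2_carrier UU_carrier ij])
  also have "\<dots> = (\<Sum>m<N+p+1. (if m = i + 1 \<and> i + 1 \<le> N + p then UU p N b $$ (m,j) else 0)
      + (if m = i - p \<and> p \<le> i then b m * UU p N b $$ (m,j) else 0))"
    by (rule sum.cong) (use ij in \<open>auto simp: L2_row\<close>)
  also have "\<dots> = (if i + 1 \<le> N + p then UU p N b $$ (i+1, j) else 0)
     + (if p \<le> i then b (i - p) * UU p N b $$ (i - p, j) else 0)"
    using ij by (auto simp: sum.distrib sum_delta_if)
  finally show ?thesis .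
qed

lemma lax2_entry:
  assumes ij: "i < N+p+1" "j < N+p+1"
  shows "(UU p N b * L2 p N b - L2 p N b * UU p N b) $$ (i,j)
    = (if i = j + p then b j * ((\<Sum>k=1..p. zext N b (int j + int k)) - (\<Sum>k=1..p. zext N b (int j - int k))) else 0)"
proof -
  have e: "(UU p N b * L2 p N b - L2 p N b * UU p N b) $$ (i,j) = (UU p N b * L2 p N b) $$ (i,j) - (L2 p N b * UU p N b) $$ (i,j)"
    by (rule index_minus_mat(1)) (use ij UU_carrier[of p N b] L2_carrier[of p N b] in auto)
  show ?thesis
  proof (cases "i = j + p")
    case True
    have jN: "j \<le> N" using ij True by simp
    have "L2 p N b $$ (j + 2*p + 1, j) = 0" if "j + 2*p + 1 < N+p+1" using that ij p1 by (auto simp: L2_col)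
    moreover have "L2 p N b $$ (j + p, j) = b j" using ij jN p1 True by (auto simp: L2_col)
    ultimately have ul: "(UU p N b * L2 p N b) $$ (i,j) = dd p N b (j + p) * b j"
      using True ij by (auto simp: UL_entry mult_2 add_ac)
    have "UU p N b $$ (j+p+1, j) = 0" if "j + p + 1 < N+p+1" using that ij by (auto simp: UU_entry)
    moreover have "UU p N b $$ (j, j) = dd p N b j" using ij by (simp add: UU_entry)
    ultimately have lu: "(L2 p N b * UU p N b) $$ (i,j) = b j * dd p N b j"
      using True ij by (auto simp: LU_entry)
    show ?thesis unfolding e ul lu dd_plus using True dd_split[of b j] by (simp add: algebra_simps)
  next
    case False
    note ne = False
    show ?thesis
    proof (cases "j = i + 1")
      case True
      have a1: "L2 p N b $$ (i + p + 1, i + 1) = (if i + 1 \<le> N then b (i+1) else 0)" if "i + p + 1 < N+p+1"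
        using that ij True p1 by (auto simp: L2_col)
      have a2: "L2 p N b $$ (i, i + 1) = 1" using ij True p1 by (auto simp: L2_col)
      have ul: "(UU p N b * L2 p N b) $$ (i,j) = (if i + 1 \<le> N then b (i+1) else 0) + dd p N b i"
        using True ij a1 a2 by (auto simp: UL_entry)
      have c1: "UU p N b $$ (i+1, i+1) = dd p N b (i+1)" using ij True by (simp add: UU_entry)
      have c2: "UU p N b $$ (i - p, i + 1) = 1" if "p \<le> i" using that ij True p1 by (auto simp: UU_entry)
      have lu: "(L2 p N b * UU p N b) $$ (i,j) = dd p N b (i+1) + (if p \<le> i then b (i - p) else 0)"
        using True ij c1 c2 by (auto simp: LU_entry)
      have z1: "zext N b (int i + 1) = (if i + 1 \<le> N then b (i+1) else 0)"
        by (auto simp: zext_def nat_add_distrib)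
      have z2: "zext N b (int i - int p) = (if p \<le> i then b (i - p) else 0)"
      proof (cases "p \<le> i")
        case True
        have "i - p \<le> N" using ij \<open>j = i + 1\<close> by simp
        hence h2: "0 \<le> int i - int p \<and> int i - int p \<le> int N" using True by arith
        have h1: "nat (int i - int p) = i - p" by arith
        show ?thesis using True h1 h2 by (simp add: zext_def)
      next
        case False thus ?thesis by (simp add: zext_def)
      qed
      show ?thesis unfolding e ul lu dd_Suc[unfolded Suc_eq_plus1] z1 z2 using ne by simp
    next
      case False
      note ne2 = False
      show ?thesis
      proof (cases "j = i + p + 2")
        case True
        have "L2 p N b $$ (i + p + 1, j) = 1" using ij True p1 by (auto simp: L2_col)
        moreover have "L2 p N b $$ (i, j) = 0" using ij True p1 by (auto simp: L2_col)
        ultimately have ul: "(UU p N b * L2 p N b) $$ (i,j) = 1" using ij True by (auto simp: UL_entry)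
        have "UU p N b $$ (i+1, j) = 1" using ij True p1 by (auto simp: UU_entry)
        moreover have "UU p N b $$ (i - p, j) = 0" if "p \<le> i" using that ij True p1 by (auto simp: UU_entry)
        ultimately have lu: "(L2 p N b * UU p N b) $$ (i,j) = 1" using ij True by (auto simp: LU_entry)
        show ?thesis unfolding e ul lu using ne by simp
      next
        case False
        have "L2 p N b $$ (i + p + 1, j) = 0" if "i + p + 1 < N+p+1" using that ij False ne ne2 p1 by (auto simp: L2_col)
        moreover have "L2 p N b $$ (i, j) = 0" using ij False ne ne2 p1 by (auto simp: L2_col)
        ultimately have ul: "(UU p N b * L2 p N b) $$ (i,j) = 0" using ij by (auto simp: UL_entry)
        have "UU p N b $$ (i+1, j) = 0" if "i + 1 \<le> N + p" using that ij False ne ne2 p1 by (auto simp: UU_entry)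
        moreover have "UU p N b $$ (i - p, j) = 0" if "p \<le> i" using that ij False ne ne2 p1 by (auto simp: UU_entry)
        ultimately have lu: "(L2 p N b * UU p N b) $$ (i,j) = 0" using ij by (auto simp: LU_entry)
        show ?thesis unfolding e ul lu using ne by simp
      qed
    qed
  qed
qed

lemma L2_mder0:
  assumes sol: "sol_b p N T b" and t: "t \<in> tdom T"
  shows "mder (tdom T) (N+p+1) (\<lambda>s. L2 p N (\<lambda>k. b k s))
     (UU p N (\<lambda>k. b k t) * L2 p N (\<lambda>k. b k t) - L2 p N (\<lambda>k. b k t) * UU p N (\<lambda>k. b k t)) t"
  unfolding mder_def
proof (intro allI impI)
  fix i j assume i: "i < N+p+1" and j: "j < N+p+1"
  have f: "(\<lambda>s. L2 p N (\<lambda>k. b k s) $$ (i,j)) = (\<lambda>s. (if j = i + 1 \<and> i + 1 \<le> N + p then 1 else 0) + (if i = j + p \<and> j \<le> N then b j s else 0))"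
    using i j unfolding L2_def by simp
  show "((\<lambda>s. L2 p N (\<lambda>k. b k s) $$ (i,j)) has_real_derivative
      (UU p N (\<lambda>k. b k t) * L2 p N (\<lambda>k. b k t) - L2 p N (\<lambda>k. b k t) * UU p N (\<lambda>k. b k t)) $$ (i,j)) (at t within tdom T)"
  proof (cases "i = j + p")
    case True
    hence jN: "j \<le> N" using i by simp
    have d: "((\<lambda>s. b j s) has_real_derivative b j t * ((\<Sum>k=1..p. zext N (\<lambda>k. b k t) (int j + int k))
           - (\<Sum>k=1..p. zext N (\<lambda>k. b k t) (int j - int k)))) (at t within tdom T)"
      using sol t jN unfolding sol_b_def by blast
    have "((\<lambda>s. (if j = i + 1 \<and> i + 1 \<le> N + p then 1 else 0) + b j s) has_real_derivative 0 + b j t * ((\<Sum>k=1..p. zext N (\<lambda>k. b k t) (int j + int k))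
           - (\<Sum>k=1..p. zext N (\<lambda>k. b k t) (int j - int k)))) (at t within tdom T)"
      by (rule DERIV_add[OF DERIV_const d])
    thus ?thesis unfolding f lax2_entry[OF i j] using True jN by simp
  next
    case False
    show ?thesis unfolding f lax2_entry[OF i j] using False by simp
  qed
qed

lemma L2_mder:
  assumes sol: "sol_b p N T b" and t: "t \<in> tdom T"
  shows "mder (tdom T) (N+p+1) (\<lambda>s. L2 p N (\<lambda>k. b k s))
     (L2 p N (\<lambda>k. b k t) * (- UU p N (\<lambda>k. b k t)) - (- UU p N (\<lambda>k. b k t)) * L2 p N (\<lambda>k. b k t)) t"
proof (rule mder_cong[OF L2_mder0[OF sol t]])
  fix i j assume i: "i < N+p+1" and j: "j < N+p+1"
  let ?A = "L2 p N (\<lambda>k. b k t)" and ?U = "UU p N (\<lambda>k. b k t)"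
  have A: "?A \<in> carrier_mat (N+p+1) (N+p+1)" by (rule L2_carrier)
  have U: "?U \<in> carrier_mat (N+p+1) (N+p+1)" by (rule UU_carrier)
  have d1: "dim_col ?A = dim_row ?U" "dim_col ?U = dim_row ?A" using A U by auto
  have "(?A * (- ?U) - (- ?U) * ?A) $$ (i,j) = (- (?A * ?U) - - (?U * ?A)) $$ (i,j)"
    by (simp only: uminus_mult_right_mat[OF d1(1)] uminus_mult_left_mat[OF d1(2)])
  also have "\<dots> = (?U * ?A - ?A * ?U) $$ (i,j)" using i j A U by simp
  finally show "(?U * ?A - ?A * ?U) $$ (i,j) = (?A * (- ?U) - (- ?U) * ?A) $$ (i,j)" by simp
qed

definition Mb :: "(nat \<Rightarrow> real) \<Rightarrow> nat \<Rightarrow> nat \<Rightarrow> real" where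
  "Mb b m x = (L2 p N b ^\<^sub>m Suc p) $$ (x,m) - UU p N b $$ (x,m)"

lemma rho_der:
  assumes sol: "sol_b p N T b" and t: "t \<in> tdom T" and m: "m < N+p+1"
  shows "((\<lambda>s. rho p N (\<lambda>k. b k s) k m) has_real_derivative
     (\<Sum>x<N+p+1. Mb (\<lambda>k. b k t) m x * rho p N (\<lambda>k. b k t) k x)) (at t within tdom T)"
proof -
  define A where "A = L2 p N (\<lambda>k. b k t)"
  define U where "U = UU p N (\<lambda>k. b k t)"
  have A: "A \<in> carrier_mat (N+p+1) (N+p+1)" unfolding A_def by (rule L2_carrier)
  have U: "U \<in> carrier_mat (N+p+1) (N+p+1)" unfolding U_def by (rule UU_carrier)
  have V: "- U \<in> carrier_mat (N+p+1) (N+p+1)" using U by simp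
  have z: "0 < N+p+1" by simp
  have md: "mder (tdom T) (N+p+1) (\<lambda>s. L2 p N (\<lambda>k. b k s) ^\<^sub>m k) (A ^\<^sub>m k * (- U) - (- U) * A ^\<^sub>m k) t"
    unfolding A_def U_def
    by (rule mder_pow[OF L2_carrier _ L2_mder[OF sol t]]) (use UU_carrier[of p N "\<lambda>k. b k t"] in simp)
  have d0: "((\<lambda>s. rho p N (\<lambda>k. b k s) k m) has_real_derivative (A ^\<^sub>m k * (- U) - (- U) * A ^\<^sub>m k) $$ (0,m)) (at t within tdom T)"
    using md m unfolding mder_def rho_def by simp
  have "(A ^\<^sub>m k * (- U) - (- U) * A ^\<^sub>m k) $$ (0,m) = (A ^\<^sub>m k * (- U)) $$ (0,m) - ((- U) * A ^\<^sub>m k) $$ (0,m)"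
    by (rule index_minus_mat(1)) (use m A U in auto)
  also have "(A ^\<^sub>m k * (- U)) $$ (0,m) = (\<Sum>x<N+p+1. (A ^\<^sub>m k) $$ (0,x) * (- U) $$ (x,m))"
    by (rule mult_entry) (use A V m in auto)
  also have "\<dots> = - (\<Sum>x<N+p+1. (A ^\<^sub>m k) $$ (0,x) * U $$ (x,m))"
    by (simp add: sum_negf[symmetric]) (rule sum.cong, use U m in auto)
  also have "((- U) * A ^\<^sub>m k) $$ (0,m) = (\<Sum>x<N+p+1. (- U) $$ (0,x) * (A ^\<^sub>m k) $$ (x,m))"
    by (rule mult_entry) (use A V m in auto)
  also have "\<dots> = - (\<Sum>x<N+p+1. (A ^\<^sub>m Suc p) $$ (0,x) * (A ^\<^sub>m k) $$ (x,m))"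
    by (simp add: sum_negf[symmetric]) (rule sum.cong, use U m in \<open>auto simp: U_def A_def UU_row0 rho_def\<close>)
  also have "(\<Sum>x<N+p+1. (A ^\<^sub>m Suc p) $$ (0,x) * (A ^\<^sub>m k) $$ (x,m)) = (\<Sum>x<N+p+1. (A ^\<^sub>m k) $$ (0,x) * (A ^\<^sub>m Suc p) $$ (x,m))"
  proof -
    have "(\<Sum>x<N+p+1. (A ^\<^sub>m Suc p) $$ (0,x) * (A ^\<^sub>m k) $$ (x,m)) = (A ^\<^sub>m (Suc p + k)) $$ (0,m)"
      by (rule pow_add_entry[OF A z m, symmetric])
    also have "Suc p + k = k + Suc p" by simp
    also have "(A ^\<^sub>m (k + Suc p)) $$ (0,m) = (\<Sum>x<N+p+1. (A ^\<^sub>m k) $$ (0,x) * (A ^\<^sub>m Suc p) $$ (x,m))"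
      by (rule pow_add_entry[OF A z m])
    finally show ?thesis .
  qed
  finally have e: "(A ^\<^sub>m k * (- U) - (- U) * A ^\<^sub>m k) $$ (0,m) =
    - (\<Sum>x<N+p+1. (A ^\<^sub>m k) $$ (0,x) * U $$ (x,m)) - - (\<Sum>x<N+p+1. (A ^\<^sub>m k) $$ (0,x) * (A ^\<^sub>m Suc p) $$ (x,m))" .
  have "(\<Sum>x<N+p+1. Mb (\<lambda>k. b k t) m x * rho p N (\<lambda>k. b k t) k x)
      = (\<Sum>x<N+p+1. (A ^\<^sub>m k) $$ (0,x) * (A ^\<^sub>m Suc p) $$ (x,m) - (A ^\<^sub>m k) $$ (0,x) * U $$ (x,m))"
    by (rule sum.cong) (auto simp: Mb_def A_def U_def rho_def algebra_simps)
  also have "\<dots> = (A ^\<^sub>m k * (- U) - (- U) * A ^\<^sub>m k) $$ (0,m)"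
    unfolding e sum_subtractf by simp
  finally show ?thesis using d0 by simp
qed

end


declare sum.lessThan_Suc[simp del] prod.lessThan_Suc[simp del]

lemma set_conv3: "{0..N+p} = {..<N+p+1}" for N p :: nat by auto

lemma sol_b_nz: "sol_b p N T b \<Longrightarrow> t \<in> tdom T \<Longrightarrow> i \<le> N \<Longrightarrow> b i t \<noteq> 0"
  unfolding sol_b_def by blast

lemma part3:
  fixes p N :: nat and T :: ereal
  assumes p1: "p \<ge> 1" and N1: "1 \<le> N" and T0: "0 < T"
  shows "\<forall>b Ct. sol_b p N T b
       \<and> (\<forall>t\<in>tdom T. \<forall>l k. 1 \<le> l \<and> l \<le> p \<and> k \<ge> N + p + 1 \<longrightarrow>
             St p N (\<lambda>m. b m t) l k
               = (\<Sum>v=0..N+p. Ct v t * St p N (\<lambda>m. b m t) l (k - v - 1)))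
       \<longrightarrow> (\<forall>v\<le>N+p. \<forall>t\<in>tdom T. Ct v t = Ct v 0)"
proof (intro allI impI ballI, elim conjE)
  fix b Ct v t
  assume sol: "sol_b p N T b"
    and hyp: "\<forall>t\<in>tdom T. \<forall>l k. 1 \<le> l \<and> l \<le> p \<and> k \<ge> N + p + 1 \<longrightarrow>
             St p N (\<lambda>m. b m t) l k
               = (\<Sum>v=0..N+p. Ct v t * St p N (\<lambda>m. b m t) l (k - v - 1))"
    and v: "v \<le> N + p" and t: "t \<in> tdom T"
  let ?n = "N+p+1"
  have rec: "rho p N (\<lambda>k. b k s) ?n k = (\<Sum>v<?n. Ct v s * rho p N (\<lambda>k. b k s) (?n - v - 1) k)"
    if s: "s \<in> tdom T" and k: "k < ?n" for s k
  proof -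
    let ?r = "rho p N (\<lambda>k. b k s)" and ?c = "cc p N (\<lambda>k. b k s)" and ?S = "St p N (\<lambda>m. b m s)"
    have bnz: "\<forall>i\<le>N. b i s \<noteq> 0" using sol_b_nz[OF sol s] by blast
    have "(\<Sum>m<?n. ?c j m * (?r ?n m - (\<Sum>v<?n. Ct v s * ?r (?n - v - 1) m))) = 0"
      if j: "j < ?n" for j
    proof -
      let ?l = "j mod p + 1" and ?q = "j div p"
      have l: "1 \<le> ?l" "?l \<le> p" using p1 by (simp_all add: Suc_leI)
      have h: "?S ?l (?n + ?q) = (\<Sum>v<?n. Ct v s * ?S ?l (?n + ?q - v - 1))"
        using hyp s l unfolding set_conv3 by auto
      have h': "(\<Sum>v<?n. Ct v s * ?S ?l (?n + ?q - v - 1)) = (\<Sum>v<?n. Ct v s * ?S ?l ((?n - v - 1) + ?q))"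
        by (rule sum.cong) auto
      have "(\<Sum>v<?n. Ct v s * ?S ?l ((?n - v - 1) + ?q))
          = (\<Sum>v<?n. \<Sum>m<?n. Ct v s * (?r (?n - v - 1) m * ?c j m))"
        by (intro sum.cong refl) (simp only: St_dot[OF p1 N1, symmetric] sum_distrib_left)
      also have "\<dots> = (\<Sum>m<?n. \<Sum>v<?n. Ct v s * (?r (?n - v - 1) m * ?c j m))"
        by (rule sum.swap)
      also have "\<dots> = (\<Sum>m<?n. ?c j m * (\<Sum>v<?n. Ct v s * ?r (?n - v - 1) m))"
        by (simp add: sum_distrib_left mult_ac)
      finally have "(\<Sum>m<?n. ?c j m * ?r ?n m) = (\<Sum>m<?n. ?c j m * (\<Sum>v<?n. Ct v s * ?r (?n - v - 1) m))"
        using h h' St_dot[OF p1 N1, of "\<lambda>k. b k s" ?n j] by (simp add: mult_ac)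
      thus ?thesis by (simp add: right_diff_distrib sum_subtractf)
    qed
    moreover have "?c j j \<noteq> 0" if j: "j < ?n" for j
      using cc_tri_diag[OF p1 N1 bnz j] by blast
    moreover have "?c j m = 0" if "j < m" "m < ?n" for j m
      using cc_tri_diag[OF p1 N1 bnz, of j] that by auto
    ultimately have "?r ?n k - (\<Sum>v<?n. Ct v s * ?r (?n - v - 1) k) = 0"
      using tri_zero2[of ?n ?c "\<lambda>m. ?r ?n m - (\<Sum>v<?n. Ct v s * ?r (?n - v - 1) m)" k] k by blast
    thus ?thesis by simp
  qed
  show "Ct v t = Ct v 0"
  proof (rule gen_const[where S="tdom T" and n="?n" and w="\<lambda>j s k. rho p N (\<lambda>k. b k s) j k"
        and M="\<lambda>s k m. Mb p N (\<lambda>k. b k s) k m" and c=Ct])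
    show "convex (tdom T)" by (rule tdom_convex)
    show "\<And>t. t \<in> tdom T \<Longrightarrow> at t within tdom T \<noteq> bot" by (rule tdom_nb)
    show "\<And>t i k. t \<in> tdom T \<Longrightarrow> i \<le> ?n \<Longrightarrow> k < ?n \<Longrightarrow>
        ((\<lambda>s. rho p N (\<lambda>k. b k s) i k) has_real_derivative (\<Sum>m<?n. Mb p N (\<lambda>k. b k t) k m * rho p N (\<lambda>k. b k t) i m)) (at t within tdom T)"
      using rho_der[OF p1 N1 sol] by blast
    show "\<And>t i. t \<in> tdom T \<Longrightarrow> i < ?n \<Longrightarrow> rho p N (\<lambda>k. b k t) i i \<noteq> 0"
      using rho_diag[OF p1 N1] by simp
    show "\<And>t i k. t \<in> tdom T \<Longrightarrow> i < k \<Longrightarrow> k < ?n \<Longrightarrow> rho p N (\<lambda>k. b k t) i k = 0"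
      using rho_tri[OF p1 N1] by blast
    show "\<And>t k. t \<in> tdom T \<Longrightarrow> k < ?n \<Longrightarrow>
        rho p N (\<lambda>k. b k t) ?n k = (\<Sum>v<?n. Ct v t * rho p N (\<lambda>k. b k t) (?n - v - 1) k)"
      using rec by blast
  qed (use v t tdom0[OF T0] in auto)
qed

theorem theorem4:
  fixes p N :: nat and T :: ereal
  assumes "p \<ge> 1" and "N \<ge> 2 * p - 1" and "0 < T"
  shows
   "(\<forall>a C. sol_a p N T a
       \<and> (\<forall>t\<in>tdom T. \<forall>i j. j \<ge> N + 2 \<longrightarrow>
             alpha p N (\<lambda>k. a k t) i j
               = (\<Sum>v=0..N+1. C v t * alpha p N (\<lambda>k. a k t) i (j - v - 1)))
       \<longrightarrow> (\<forall>v\<le>N+1. \<forall>t\<in>tdom T. C v t = C v 0))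
  \<and> (\<forall>a D. sol_a p N T a
       \<and> (\<forall>t\<in>tdom T. \<forall>i j. i \<ge> N + 2 \<longrightarrow>
             alpha p N (\<lambda>k. a k t) i j
               = (\<Sum>v=0..N+1. D v t * alpha p N (\<lambda>k. a k t) (i - v - 1) j))
       \<longrightarrow> (\<forall>v\<le>N+1. \<forall>t\<in>tdom T. D v t = D v 0))
  \<and> (\<forall>b Ct. sol_b p N T b
       \<and> (\<forall>t\<in>tdom T. \<forall>l k. 1 \<le> l \<and> l \<le> p \<and> k \<ge> N + p + 1 \<longrightarrow>
             St p N (\<lambda>m. b m t) l k
               = (\<Sum>v=0..N+p. Ct v t * St p N (\<lambda>m. b m t) l (k - v - 1)))
       \<longrightarrow> (\<forall>v\<le>N+p. \<forall>t\<in>tdom T. Ct v t = Ct v 0))"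
proof -
  have pN: "p \<le> N" using assms(1,2) by linarith
  have N1: "1 \<le> N" using assms(1,2) by linarith
  show ?thesis using part1[OF assms(1) pN assms(3)] part2[OF assms(1) pN assms(3)] part3[OF assms(1) N1 assms(3)]
    by blast
qed


end
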